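(* Let $B>0$, $T\ge 2$, and let $\mathcal F$ be the set of all $1$-Lipschitz functions from $[0,1]$ to $[-B,B]$. Let $(x_t)$ be any sequence in $[0,1]$ and $(y_t)$ any real sequence with $\max_{1\le t\le T}|y_t|\le B$. Then the Dyadic Chaining Algorithm (described in the context) tuned with $\gamma=BT^{-1/3}$ and $M=\lceil\log_2(\gamma T/B)\rceil$ satisfies, for some absolute constant $c>0$, $$\sum_{t=1}^T(y_t-\hat y_t)^2-\inf_{f\in\mathcal F}\sum_{t=1}^T(y_t-f(x_t))^2\le c\max\{B,B^2\}\,T^{1/3}\log T.$$
   Context: Online protocol: at round $t$, $x_t$ is revealed, the forecaster predicts $\hat y_t$, then $y_t$ is revealed. Adaptive Multi-variable Exponentiated Gradient (AMEG) on $\Delta_{N_1}\times\cdots\times\Delta_{N_K}$ ($\Delta_N$ the probability simplex of $\mathbb R^N$) with gradient bounds $G^{(1)},\ldots,G^{(K)}>0$: start with uniform $\hat{\boldsymbol u}^{(k)}_1$; at each of its rounds $t$ it outputs $(\hat{\boldsymbol u}^{(k)}_t)_k$, receives a differentiable jointly convex loss $\ell_t$, sets $\eta^{(k)}_{t+1}=\frac{1}{G^{(k)}}\sqrt{\log N_k/(1+\sum_{s=1}^t\mathbb 1\{\sup|\nabla_{\boldsymbol u^{(k)}}\ell_s|>0\})}$ (sup of the absolute coordinates of the partial gradient over the whole domain) and $\hat u^{(k)}_{t+1,i}\propto\exp\big(-\eta^{(k)}_{t+1}\sum_{s=1}^t\partial_{u^{(k)}_i}\ell_s(\hat{\boldsymbol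 u}^{(1)}_s,\ldots,\hat{\boldsymbol u}^{(K)}_s)\big)$, normalized over $i$. Dyadic Chaining Algorithm: assume $1/\gamma$ and $2B/\gamma$ are integers. Let $I_a=[(a-1)\gamma,a\gamma)$, $a=1,\ldots,1/\gamma$ (the last one closed at $1$). For $m\ge1$, split $I_a$ into $2^m$ consecutive subintervals $I_a^{(m,n)}$, $n=1,\ldots,2^m$, of length $\gamma/2^m$. For each $a$ run an independent instance $\mathcal A_a$ that is fed only rounds $t$ with $x_t\in I_a$. Inside $\mathcal A_a$, for each $j\in\{0,\ldots,2B/\gamma\}$ run an AMEG instance $\mathcal B_{a,j}$ with blocks indexed by $(m,n)$, $1\le m\le M$, $1\le n\le 2^m$, each block $\boldsymbol u^{(m,n)}\in\Delta_2$, gradient bounds $G^{(m,n)}=16B\gamma/2^m$, and losses $$\ell_t(\boldsymbol u)=\Big(y_t-(-B+j\gamma)-\sum_{m=1}^M\sum_{n=1}^{2^m}\Big(u^{(m,n)}_1\tfrac{-\gamma}{2^{m-1}}+u^{(m,n)}_2\tfrac{\gamma}{2^{m-1}}\Big)\mathbb 1\{x_t\in I_a^{(m,n)}\}\Big)^2.$$ With its current weights $\hat{\boldsymbol u}^{(m,n)}_{t,a,j}$, let $\hat f_{t,a,j}(x)=-B+j\gamma+\sum_{m,n}\big(\hat u^{(m,n)}_{t,a,j,1}\frac{-\gamma}{2^{m-1}}+\hat u^{(m,n)}_{t,a,j,2}\frac{\gamma}{2^{m-1}}\big)\mathbb 1\{x\in I_a^{(m,n)}\}$. Aggregate them by exponential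 weights $\hat w_{t,a,j}\propto\exp\big(-\eta\sum_{s<t,\,x_s\in I_a}(y_s-\hat f_{s,a,j}(x_s))^2\big)$ with $\eta=1/(32B^2)$, giving $\hat f_{t,a}=\sum_j\hat w_{t,a,j}\hat f_{t,a,j}$. The prediction is $\hat y_t=\sum_a\hat f_{t,a}(x_t)\mathbb 1\{x_t\in I_a\}$. *)

theory Defs
  imports "HOL-Analysis.Analysis"
begin

text \<open>A point of the product of simplices is a function u :: 'k => nat => real; block k has
coordinates 1..Nk k.  Only the blocks in K and coordinates 1..Nk k are meaningful.\<close>

definition simplex_prod :: "'k set \<Rightarrow> ('k \<Rightarrow> nat) \<Rightarrow> ('k \<Rightarrow> nat \<Rightarrow> real) set" where
  "simplex_prod K Nk = {u. \<forall>k\<in>K. (\<forall>i\<in>{1..Nk k}. 0 \<le> u k i) \<and> (\<Sum>i=1..Nk k. u k i) = 1}"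

definition partial_coord :: "(('k \<Rightarrow> nat \<Rightarrow> real) \<Rightarrow> real) \<Rightarrow> 'k \<Rightarrow> nat \<Rightarrow> ('k \<Rightarrow> nat \<Rightarrow> real) \<Rightarrow> real" where
  "partial_coord L k i u = deriv (\<lambda>v. L (u(k := (u k)(i := v)))) (u k i)"

text \<open>Block k of loss L is active iff the sup over the domain of the absolute coordinates of the
partial gradient w.r.t. block k is positive, i.e. some coordinate of it is nonzero somewhere.\<close>
definition ameg_active :: "'k set \<Rightarrow> ('k \<Rightarrow> nat) \<Rightarrow> (('k \<Rightarrow> nat \<Rightarrow> real) \<Rightarrow> real) \<Rightarrow> 'k \<Rightarrow> bool" where
  "ameg_active K Nk L k = (\<exists>u\<in>simplex_prod K Nk. \<exists>i\<in>{1..Nk k}. partial_coord L k i u \<noteq> 0)"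

definition ameg_weights :: "'k set \<Rightarrow> ('k \<Rightarrow> nat) \<Rightarrow> ('k \<Rightarrow> real) \<Rightarrow> ('k \<Rightarrow> nat \<Rightarrow> real) \<Rightarrow> ('k \<Rightarrow> nat)
    \<Rightarrow> ('k \<Rightarrow> nat \<Rightarrow> real)" where
  "ameg_weights K Nk G S C = (\<lambda>k i.
     (let eta = (1 / G k) * sqrt (ln (real (Nk k)) / (1 + real (C k))) in
      if k \<in> K \<and> i \<in> {1..Nk k}
      then exp (- eta * S k i) / (\<Sum>i'=1..Nk k. exp (- eta * S k i'))
      else 0))"

text \<open>State before global round t: cumulative partial gradients (evaluated at the algorithm's own
iterates) and counts of active rounds, over the rounds s < t belonging to the set R of rounds
fed to the instance.\<close>
fun ameg_state :: "'k set \<Rightarrow> ('k \<Rightarrow> nat) \<Rightarrow> ('k \<Rightarrow> real) \<Rightarrow> (nat \<Rightarrow> ('k \<Rightarrow> nat \<Rightarrow> real) \<Rightarrow> real)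
    \<Rightarrow> nat set \<Rightarrow> nat \<Rightarrow> ('k \<Rightarrow> nat \<Rightarrow> real) \<times> ('k \<Rightarrow> nat)" where
  "ameg_state K Nk G L R 0 = (\<lambda>k i. 0, \<lambda>k. 0)"
| "ameg_state K Nk G L R (Suc t) =
     (let (S, C) = ameg_state K Nk G L R t;
          u = ameg_weights K Nk G S C
      in if t \<in> R
         then (\<lambda>k i. S k i + partial_coord (L t) k i u,
               \<lambda>k. C k + (if ameg_active K Nk (L t) k then 1 else 0))
         else (S, C))"

definition ameg_out :: "'k set \<Rightarrow> ('k \<Rightarrow> nat) \<Rightarrow> ('k \<Rightarrow> real) \<Rightarrow> (nat \<Rightarrow> ('k \<Rightarrow> nat \<Rightarrow> real) \<Rightarrow> real)
    \<Rightarrow> nat set \<Rightarrow> nat \<Rightarrow> ('k \<Rightarrow> nat \<Rightarrow> real)" where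
  "ameg_out K Nk G L R t = (case ameg_state K Nk G L R t of (S, C) \<Rightarrow> ameg_weights K Nk G S C)"

definition dc_I :: "real \<Rightarrow> nat \<Rightarrow> real set" where
  "dc_I \<gamma> a = (if real a * \<gamma> = 1 then {(real a - 1) * \<gamma> .. real a * \<gamma>}
                else {(real a - 1) * \<gamma> ..< real a * \<gamma>})"

definition dc_sub :: "real \<Rightarrow> nat \<Rightarrow> nat \<Rightarrow> nat \<Rightarrow> real set" where
  "dc_sub \<gamma> a m n =
     (let lo = (real a - 1) * \<gamma> + (real n - 1) * \<gamma> / 2 ^ m;
          hi = (real a - 1) * \<gamma> + real n * \<gamma> / 2 ^ m
      in dc_I \<gamma> a \<inter> (if n = 2 ^ m then {lo..hi} else {lo..<hi}))"

definition dc_blocks :: "nat \<Rightarrow> (nat \<times> nat) set" where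
  "dc_blocks M = {(m, n). 1 \<le> m \<and> m \<le> M \<and> 1 \<le> n \<and> n \<le> 2 ^ m}"

definition dc_f :: "real \<Rightarrow> real \<Rightarrow> nat \<Rightarrow> nat \<Rightarrow> nat \<Rightarrow> (nat \<times> nat \<Rightarrow> nat \<Rightarrow> real) \<Rightarrow> real \<Rightarrow> real" where
  "dc_f B \<gamma> M a j u z = - B + real j * \<gamma> +
     (\<Sum>(m, n)\<in>dc_blocks M. (u (m, n) 1 * (- \<gamma> / 2 ^ (m - 1)) + u (m, n) 2 * (\<gamma> / 2 ^ (m - 1)))
                             * indicator (dc_sub \<gamma> a m n) z)"

definition dc_loss :: "real \<Rightarrow> real \<Rightarrow> nat \<Rightarrow> nat \<Rightarrow> nat \<Rightarrow> (nat \<Rightarrow> real) \<Rightarrow> (nat \<Rightarrow> real) \<Rightarrow> nat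
    \<Rightarrow> (nat \<times> nat \<Rightarrow> nat \<Rightarrow> real) \<Rightarrow> real" where
  "dc_loss B \<gamma> M a j x y t u = (y t - dc_f B \<gamma> M a j u (x t))\<^sup>2"

text \<open>Rounds fed to A_a (rounds are numbered 1,2,...).\<close>
definition dc_rounds :: "real \<Rightarrow> nat \<Rightarrow> (nat \<Rightarrow> real) \<Rightarrow> nat set" where
  "dc_rounds \<gamma> a x = {t. 1 \<le> t \<and> x t \<in> dc_I \<gamma> a}"

definition dc_u :: "real \<Rightarrow> real \<Rightarrow> nat \<Rightarrow> nat \<Rightarrow> nat \<Rightarrow> (nat \<Rightarrow> real) \<Rightarrow> (nat \<Rightarrow> real) \<Rightarrow> nat
    \<Rightarrow> (nat \<times> nat \<Rightarrow> nat \<Rightarrow> real)" where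
  "dc_u B \<gamma> M a j x y t =
     ameg_out (dc_blocks M) (\<lambda>_. 2) (\<lambda>(m, n). 16 * B * \<gamma> / 2 ^ m)
              (dc_loss B \<gamma> M a j x y) (dc_rounds \<gamma> a x) t"

definition dc_fj :: "real \<Rightarrow> real \<Rightarrow> nat \<Rightarrow> nat \<Rightarrow> nat \<Rightarrow> (nat \<Rightarrow> real) \<Rightarrow> (nat \<Rightarrow> real) \<Rightarrow> nat \<Rightarrow> real \<Rightarrow> real" where
  "dc_fj B \<gamma> M a j x y t z = dc_f B \<gamma> M a j (dc_u B \<gamma> M a j x y t) z"

text \<open>Indices j range over {0..2B/gamma}, a over {1..1/gamma} (integers by assumption).\<close>
definition dc_J :: "real \<Rightarrow> real \<Rightarrow> nat" where
  "dc_J B \<gamma> = nat \<lfloor>2 * B / \<gamma>\<rfloor>"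

definition dc_A :: "real \<Rightarrow> nat" where
  "dc_A \<gamma> = nat \<lfloor>1 / \<gamma>\<rfloor>"

definition dc_cumloss :: "real \<Rightarrow> real \<Rightarrow> nat \<Rightarrow> nat \<Rightarrow> nat \<Rightarrow> (nat \<Rightarrow> real) \<Rightarrow> (nat \<Rightarrow> real) \<Rightarrow> nat \<Rightarrow> real" where
  "dc_cumloss B \<gamma> M a j x y t =
     (\<Sum>s\<in>{s. 1 \<le> s \<and> s < t \<and> x s \<in> dc_I \<gamma> a}. (y s - dc_fj B \<gamma> M a j x y s (x s))\<^sup>2)"

definition dc_w :: "real \<Rightarrow> real \<Rightarrow> nat \<Rightarrow> nat \<Rightarrow> nat \<Rightarrow> (nat \<Rightarrow> real) \<Rightarrow> (nat \<Rightarrow> real) \<Rightarrow> nat \<Rightarrow> real" where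
  "dc_w B \<gamma> M a j x y t =
     (let \<eta> = 1 / (32 * B\<^sup>2) in
      exp (- \<eta> * dc_cumloss B \<gamma> M a j x y t)
      / (\<Sum>j'=0..dc_J B \<gamma>. exp (- \<eta> * dc_cumloss B \<gamma> M a j' x y t)))"

definition dc_fa :: "real \<Rightarrow> real \<Rightarrow> nat \<Rightarrow> nat \<Rightarrow> (nat \<Rightarrow> real) \<Rightarrow> (nat \<Rightarrow> real) \<Rightarrow> nat \<Rightarrow> real \<Rightarrow> real" where
  "dc_fa B \<gamma> M a x y t z = (\<Sum>j=0..dc_J B \<gamma>. dc_w B \<gamma> M a j x y t * dc_fj B \<gamma> M a j x y t z)"

text \<open>Prediction at round t (depends on y only through y_1..y_{t-1}).\<close>
definition dc_pred :: "real \<Rightarrow> real \<Rightarrow> nat \<Rightarrow> (nat \<Rightarrow> real) \<Rightarrow> (nat \<Rightarrow> real) \<Rightarrow> nat \<Rightarrow> real" where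
  "dc_pred B \<gamma> M x y t = (\<Sum>a=1..dc_A \<gamma>. dc_fa B \<gamma> M a x y t (x t) * indicator (dc_I \<gamma> a) (x t))"

definition lip1_class :: "real \<Rightarrow> (real \<Rightarrow> real) set" where
  "lip1_class B = {f. (\<forall>z\<in>{0..1}. f z \<in> {-B..B}) \<and> (\<forall>z\<in>{0..1}. \<forall>w\<in>{0..1}. \<bar>f z - f w\<bar> \<le> \<bar>z - w\<bar>)}"

end

theory Submission
  imports Defs
begin


definition Phi :: "real \<Rightarrow> real \<Rightarrow> real \<Rightarrow> real" where
  "Phi \<eta> S1 S2 = - (1/\<eta>) * ln ((exp (-\<eta>*S1) + exp (-\<eta>*S2)) / 2)"

lemma exp_le_quad: fixes x :: real assumes "\<bar>x\<bar> \<le> 1" shows "exp x \<le> 1 + x + x\<^sup>2"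
proof (cases "x \<ge> 0")
  case True then show ?thesis using exp_bound assms by auto
next
  case False
  let ?h = "\<lambda>x. 1 + x + x\<^sup>2 - exp x"
  have "?h 0 \<le> ?h x"
  proof (rule DERIV_nonpos_imp_nonincreasing[of x 0 ?h])
    show "x \<le> 0" using False by simp
    fix z assume z: "x \<le> z" "z \<le> 0"
    have "DERIV ?h z :> 1 + 2*z - exp z"
      by (rule derivative_eq_intros refl | simp)+
    moreover have "1 + 2*z - exp z \<le> 0" using exp_ge_add_one_self[of z] z by linarith
    ultimately show "\<exists>y. DERIV ?h z :> y \<and> y \<le> 0" by blast
  qed
  then show ?thesis by simp
qed

lemma Phi_mono:
  assumes "0 < e'" "e' \<le> e"
  shows "Phi e S1 S2 \<le> Phi e' S1 S2"
proof -
  define b1 where "b1 = exp (-e'*S1)"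
  define b2 where "b2 = exp (-e'*S2)"
  define p where "p = e/e'"
  have p1: "p \<ge> 1" using assms by (simp add: p_def)
  have bpos: "b1 > 0" "b2 > 0" by (auto simp: b1_def b2_def)
  have e1: "exp (-e*S1) = b1 powr p" unfolding b1_def p_def powr_def using assms
    by (simp add: field_simps)
  have e2: "exp (-e*S2) = b2 powr p" unfolding b2_def p_def powr_def using assms
    by (simp add: field_simps)
  have cv: "convex_on {0<..} (\<lambda>x::real. x powr p)" using powr_convex p1 by blast
  have "((1/2) * b1 + (1/2) * b2) powr p \<le> (1/2) * b1 powr p + (1/2) * b2 powr p"
    using convex_onD[OF cv, of "1/2" b1 b2] bpos by simp
  hence jen: "((b1 + b2)/2) powr p \<le> (b1 powr p + b2 powr p)/2" by (simp add: field_simps)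
  have mpos: "(b1+b2)/2 > 0" using bpos by simp
  have "ln (((b1 + b2)/2) powr p) \<le> ln ((b1 powr p + b2 powr p)/2)"
    using jen mpos bpos by (subst ln_le_cancel_iff) (auto intro: add_pos_pos)
  hence "p * ln ((b1+b2)/2) \<le> ln ((exp (-e*S1) + exp (-e*S2))/2)"
    using mpos by (simp add: ln_powr e1[symmetric] e2[symmetric])
  hence "(e/e') * ln ((b1+b2)/2) \<le> ln ((exp (-e*S1) + exp (-e*S2))/2)" by (simp add: p_def)
  hence "(1/e') * ln ((b1+b2)/2) \<le> (1/e) * ln ((exp (-e*S1) + exp (-e*S2))/2)"
    using assms by (simp add: field_simps)
  thus ?thesis unfolding Phi_def b1_def b2_def by simp
qed

lemma Phi_le:
  assumes "e > 0" "u1 \<ge> 0" "u2 \<ge> 0" "u1 + u2 = 1"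
  shows "Phi e S1 S2 \<le> u1 * S1 + u2 * S2 + ln 2 / e"
proof -
  have gen: "Phi e S1 S2 \<le> S + ln 2 / e" if "exp (-e*S) \<le> exp (-e*S1) + exp (-e*S2)" for S
  proof -
    have "ln (exp (-e*S) / 2) \<le> ln ((exp (-e*S1) + exp (-e*S2)) / 2)"
      using that by (subst ln_le_cancel_iff) (auto intro: add_pos_pos)
    hence "-e*S - ln 2 \<le> ln ((exp (-e*S1) + exp (-e*S2)) / 2)" by (simp add: ln_div)
    hence "- (1/e) * ln ((exp (-e*S1) + exp (-e*S2)) / 2) \<le> S + ln 2 / e"
      using assms(1) by (simp add: field_simps)
    thus ?thesis by (simp add: Phi_def)
  qed
  have a: "Phi e S1 S2 \<le> S1 + ln 2 / e" by (rule gen) (smt (verit) exp_gt_zero)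
  have b: "Phi e S1 S2 \<le> S2 + ln 2 / e" by (rule gen) (smt (verit) exp_gt_zero)
  have "u1 * Phi e S1 S2 + u2 * Phi e S1 S2 \<le> u1 * (S1 + ln 2 / e) + u2 * (S2 + ln 2 / e)"
    using a b assms by (intro add_mono mult_left_mono) auto
  moreover have "u1 * Phi e S1 S2 + u2 * Phi e S1 S2 = (u1 + u2) * Phi e S1 S2"
    by (simp add: distrib_right)
  moreover have "u1 * (S1 + ln 2 / e) + u2 * (S2 + ln 2 / e) = u1 * S1 + u2 * S2 + (u1 + u2) * (ln 2 / e)"
    by (simp add: algebra_simps add_divide_distrib)
  ultimately show ?thesis using assms(4) by simp
qed

lemma Phi_step:
  fixes S1 S2 :: real
  assumes e: "e > 0" and g1: "\<bar>g1\<bar> \<le> G" and g2: "\<bar>g2\<bar> \<le> G" and eG: "e * G \<le> 1"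
  defines "w1 \<equiv> exp (-e*S1) / (exp (-e*S1) + exp (-e*S2))"
  defines "w2 \<equiv> exp (-e*S2) / (exp (-e*S1) + exp (-e*S2))"
  shows "g1 * w1 + g2 * w2 \<le> Phi e (S1+g1) (S2+g2) - Phi e S1 S2 + e * G\<^sup>2"
proof -
  define D where "D = exp (-e*S1) + exp (-e*S2)"
  have Dpos: "D > 0" by (simp add: D_def add_pos_pos)
  have w: "w1 \<ge> 0" "w2 \<ge> 0" "w1 + w2 = 1" using Dpos
    by (auto simp: w1_def w2_def add_divide_distrib[symmetric] D_def)
  have x1: "\<bar>-e*g1\<bar> \<le> 1" using e g1 eG
    by (metis abs_minus_cancel abs_mult abs_of_pos dual_order.trans mult_left_mono order_less_imp_le)
  have x2: "\<bar>-e*g2\<bar> \<le> 1" using e g2 eG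
    by (metis abs_minus_cancel abs_mult abs_of_pos dual_order.trans mult_left_mono order_less_imp_le)
  have q1: "(e*g1)\<^sup>2 \<le> (e*G)\<^sup>2" using g1 e by (simp add: power_mult_distrib abs_le_square_iff[symmetric])
  have q2: "(e*g2)\<^sup>2 \<le> (e*G)\<^sup>2" using g2 e by (simp add: power_mult_distrib abs_le_square_iff[symmetric])
  have "w1 * exp (-e*g1) + w2 * exp (-e*g2) \<le> w1 * (1 + (-e*g1) + (e*G)\<^sup>2) + w2 * (1 + (-e*g2) + (e*G)\<^sup>2)"
    using exp_le_quad[OF x1] exp_le_quad[OF x2] q1 q2 w
    by (intro add_mono mult_left_mono) auto
  also have "\<dots> = (w1 + w2) - e * (g1*w1 + g2*w2) + (w1 + w2) * (e*G)\<^sup>2" by (simp add: algebra_simps)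
  also have "\<dots> = 1 - e * (g1*w1 + g2*w2) + (e*G)\<^sup>2" using w by simp
  finally have A: "w1 * exp (-e*g1) + w2 * exp (-e*g2) \<le> 1 - e * (g1*w1 + g2*w2) + (e*G)\<^sup>2" .
  have Apos: "w1 * exp (-e*g1) + w2 * exp (-e*g2) > 0"
  proof -
    have "w1 * exp (-e*g1) \<ge> 0" "w2 * exp (-e*g2) \<ge> 0" using w by auto
    moreover have "w1 > 0 \<or> w2 > 0" using w by auto
    ultimately show ?thesis by (auto intro: add_pos_nonneg add_nonneg_pos)
  qed
  have L: "ln (w1 * exp (-e*g1) + w2 * exp (-e*g2)) \<le> - e * (g1*w1 + g2*w2) + (e*G)\<^sup>2"
    using ln_le_minus_one[OF Apos] A by linarith
  have eq: "(exp (-e*(S1+g1)) + exp (-e*(S2+g2)))/2 = (D/2) * (w1 * exp (-e*g1) + w2 * exp (-e*g2))"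
  proof -
    have "(D/2) * (w1 * exp (-e*g1) + w2 * exp (-e*g2)) = (exp (-e*S1) * exp (-e*g1) + exp (-e*S2) * exp (-e*g2))/2"
      using Dpos unfolding w1_def w2_def D_def[symmetric] by (simp add: field_simps)
    also have "\<dots> = (exp (-e*(S1+g1)) + exp (-e*(S2+g2)))/2"
      by (simp add: exp_add[symmetric] algebra_simps)
    finally show ?thesis by simp
  qed
  have "Phi e (S1+g1) (S2+g2) - Phi e S1 S2 = - (1/e) * ln (w1 * exp (-e*g1) + w2 * exp (-e*g2))"
  proof -
    have "ln ((D/2) * (w1 * exp (-e*g1) + w2 * exp (-e*g2))) = ln (D/2) + ln (w1 * exp (-e*g1) + w2 * exp (-e*g2))"
      using Dpos Apos by (intro ln_mult_pos) auto
    thus ?thesis unfolding Phi_def eq D_def[symmetric] by (simp add: algebra_simps add_divide_distrib)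
  qed
  also have "\<dots> \<ge> (g1*w1 + g2*w2) - e * G\<^sup>2"
  proof -
    have "(1/e) * ln (w1 * exp (-e*g1) + w2 * exp (-e*g2)) \<le> (1/e) * (- e * (g1*w1 + g2*w2) + (e*G)\<^sup>2)"
      using L e by (intro mult_left_mono) auto
    also have "\<dots> = - (g1*w1 + g2*w2) + e * G\<^sup>2" using e by (simp add: field_simps power2_eq_square)
    finally show ?thesis by simp
  qed
  finally show ?thesis by simp
qed

lemma sqrt_step_ineq:
  fixes c :: real assumes "c \<ge> 0"
  shows "2 * sqrt c + 1 / sqrt (1 + c) \<le> 2 * sqrt (1 + c)"
proof -
  have p: "sqrt (1+c) > 0" using assms by simp
  have "sqrt c * sqrt (1 + c) \<le> c + 1/2"
  proof -
    have "sqrt c * sqrt (1 + c) = sqrt (c * (1+c))" by (simp add: real_sqrt_mult)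
    also have "\<dots> \<le> sqrt ((c + 1/2)^2)" using assms by (intro real_sqrt_le_mono) (simp add: power2_eq_square algebra_simps)
    also have "\<dots> = c + 1/2" using assms by simp
    finally show ?thesis .
  qed
  hence "2 * sqrt c * sqrt (1 + c) + 1 \<le> 2 * (sqrt (1 + c))^2" using assms by simp
  hence "(2 * sqrt c + 1 / sqrt (1 + c)) * sqrt (1+c) \<le> (2 * sqrt (1 + c)) * sqrt (1+c)"
    using p by (simp add: algebra_simps power2_eq_square)
  thus ?thesis using p by (simp add: mult_le_cancel_right)
qed

lemma EG_regret_aux:
  fixes G :: real and g :: "nat \<Rightarrow> nat \<Rightarrow> real" and act :: "nat \<Rightarrow> bool"
    and S :: "nat \<Rightarrow> nat \<Rightarrow> real" and C :: "nat \<Rightarrow> nat" and T :: nat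
  assumes G: "G > 0"
  and SS: "\<And>t i. S (Suc t) i = S t i + g t i"
  and CS: "\<And>t. C (Suc t) = C t + (if act t then 1 else 0)"
  and gb: "\<And>t i. t < T \<Longrightarrow> i \<in> {1,2} \<Longrightarrow> \<bar>g t i\<bar> \<le> G"
  and ga: "\<And>t. t < T \<Longrightarrow> \<not> act t \<Longrightarrow> g t 1 = 0 \<and> g t 2 = 0"
  and C0: "C 0 = 0" and S0: "S 0 1 = 0" "S 0 2 = 0"
  defines "eta \<equiv> \<lambda>t. sqrt (ln 2 / (1 + real (C t))) / G"
  defines "w \<equiv> \<lambda>t i. exp (- eta t * S t i) / (exp (- eta t * S t 1) + exp (- eta t * S t 2))"
  shows "n \<le> T \<Longrightarrow> (\<Sum>t<n. g t 1 * w t 1 + g t 2 * w t 2) \<le> Phi (eta n) (S n 1) (S n 2) + 2 * G * sqrt (C n)"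
proof (induction n)
  case 0
  show ?case using S0 by (simp add: Phi_def C0)
next
  case (Suc n)
  have nT: "n < T" using Suc by simp
  have IH: "(\<Sum>t<n. g t 1 * w t 1 + g t 2 * w t 2) \<le> Phi (eta n) (S n 1) (S n 2) + 2 * G * sqrt (C n)"
    using Suc by simp
  have etapos: "\<And>t. eta t > 0" unfolding eta_def using G by simp
  show ?case
  proof (cases "act n")
    case False
    hence g0: "g n 1 = 0" "g n 2 = 0" using ga nT by auto
    have "S (Suc n) 1 = S n 1" "S (Suc n) 2 = S n 2" "C (Suc n) = C n" using SS CS False g0 by auto
    hence "eta (Suc n) = eta n" by (simp add: eta_def)
    thus ?thesis using IH g0 \<open>S (Suc n) 1 = S n 1\<close> \<open>S (Suc n) 2 = S n 2\<close> \<open>C (Suc n) = C n\<close> by simp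
  next
    case True
    have Cs: "C (Suc n) = C n + 1" using CS True by simp
    have l2: "ln (2::real) > 0" "ln (2::real) < 1" using ln_2_less_1 by auto
    have eG: "eta n * G = sqrt (ln 2 / (1 + real (C n)))" using G by (simp add: eta_def)
    have eG1: "eta n * G \<le> 1"
    proof -
      have "ln 2 / (1 + real (C n)) \<le> 1" using l2 by (simp add: divide_le_eq)
      thus ?thesis unfolding eG by simp
    qed
    have step: "g n 1 * w n 1 + g n 2 * w n 2 \<le> Phi (eta n) (S n 1 + g n 1) (S n 2 + g n 2) - Phi (eta n) (S n 1) (S n 2) + eta n * G\<^sup>2"
      unfolding w_def using Phi_step[OF etapos gb[OF nT] gb[OF nT] eG1] by simp
    have mono: "eta (Suc n) \<le> eta n" unfolding eta_def Cs using G l2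
      by (intro divide_right_mono real_sqrt_le_mono divide_left_mono) auto
    have Pm: "Phi (eta n) (S (Suc n) 1) (S (Suc n) 2) \<le> Phi (eta (Suc n)) (S (Suc n) 1) (S (Suc n) 2)"
      by (rule Phi_mono[OF etapos mono])
    have q: "eta n * G\<^sup>2 \<le> G / sqrt (1 + real (C n))"
    proof -
      have "eta n * G\<^sup>2 = G * sqrt (ln 2 / (1 + real (C n)))" using eG by (simp add: power2_eq_square)
      also have "\<dots> \<le> G * sqrt (1 / (1 + real (C n)))" using G l2
        by (intro mult_left_mono real_sqrt_le_mono divide_right_mono) auto
      also have "\<dots> = G / sqrt (1 + real (C n))" by (simp add: real_sqrt_divide)
      finally show ?thesis .
    qed
    have sq: "2 * G * sqrt (C n) + G / sqrt (1 + real (C n)) \<le> 2 * G * sqrt (C (Suc n))"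
    proof -
      have "G * (2 * sqrt (C n) + 1 / sqrt (1 + real (C n))) \<le> G * (2 * sqrt (1 + real (C n)))"
        using sqrt_step_ineq[of "real (C n)"] G by (intro mult_left_mono) auto
      thus ?thesis unfolding Cs by (simp add: algebra_simps)
    qed
    have "(\<Sum>t<Suc n. g t 1 * w t 1 + g t 2 * w t 2) = (\<Sum>t<n. g t 1 * w t 1 + g t 2 * w t 2) + (g n 1 * w n 1 + g n 2 * w n 2)"
      by simp
    also have "\<dots> \<le> Phi (eta (Suc n)) (S (Suc n) 1) (S (Suc n) 2) + 2 * G * sqrt (C (Suc n))"
      unfolding SS using IH step Pm[unfolded SS] q sq by linarith
    finally show ?thesis .
  qed
qed

lemma EG_regret:
  fixes G :: real and g :: "nat \<Rightarrow> nat \<Rightarrow> real" and act :: "nat \<Rightarrow> bool"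
    and S :: "nat \<Rightarrow> nat \<Rightarrow> real" and C :: "nat \<Rightarrow> nat" and T :: nat
  assumes G: "G > 0"
  and SS: "\<And>t i. S (Suc t) i = S t i + g t i"
  and CS: "\<And>t. C (Suc t) = C t + (if act t then 1 else 0)"
  and gb: "\<And>t i. t < T \<Longrightarrow> i \<in> {1,2} \<Longrightarrow> \<bar>g t i\<bar> \<le> G"
  and ga: "\<And>t. t < T \<Longrightarrow> \<not> act t \<Longrightarrow> g t 1 = 0 \<and> g t 2 = 0"
  and C0: "C 0 = 0" and S0: "S 0 1 = 0" "S 0 2 = 0"
  and u: "u1 \<ge> 0" "u2 \<ge> 0" "u1 + u2 = 1"
  defines "eta \<equiv> \<lambda>t. sqrt (ln 2 / (1 + real (C t))) / G"
  defines "w \<equiv> \<lambda>t i. exp (- eta t * S t i) / (exp (- eta t * S t 1) + exp (- eta t * S t 2))"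
  shows "(\<Sum>t<T. g t 1 * (w t 1 - u1) + g t 2 * (w t 2 - u2)) \<le> 3 * G * sqrt (1 + real (C T))"
proof -
  have A: "(\<Sum>t<T. g t 1 * w t 1 + g t 2 * w t 2) \<le> Phi (eta T) (S T 1) (S T 2) + 2 * G * sqrt (C T)"
    using EG_regret_aux[OF G SS CS gb ga C0 S0] unfolding eta_def w_def by blast
  have Ssum: "\<And>i n. S n i = S 0 i + (\<Sum>t<n. g t i)"
  proof -
    fix i n show "S n i = S 0 i + (\<Sum>t<n. g t i)" by (induction n) (auto simp: SS)
  qed
  have etapos: "eta T > 0" unfolding eta_def using G by simp
  have P: "Phi (eta T) (S T 1) (S T 2) \<le> u1 * S T 1 + u2 * S T 2 + ln 2 / eta T"
    using Phi_le[OF etapos u] .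
  have l2: "ln (2::real) > 0" "ln (2::real) < 1" using ln_2_less_1 by auto
  have L: "ln 2 / eta T \<le> G * sqrt (1 + real (C T))"
  proof -
    have c: "1 + real (C T) > 0" by simp
    have "ln 2 / eta T = G * (ln 2 / sqrt (ln 2 / (1 + real (C T))))" unfolding eta_def using G by simp
    also have "ln 2 / sqrt (ln 2 / (1 + real (C T))) = sqrt (ln 2) * sqrt (1 + real (C T))"
      using l2 c by (simp add: real_sqrt_divide field_simps)
    also have "\<dots> \<le> 1 * sqrt (1 + real (C T))" using l2 by (intro mult_right_mono) auto
    finally show ?thesis using G by simp
  qed
  have "(\<Sum>t<T. g t 1 * (w t 1 - u1) + g t 2 * (w t 2 - u2)) = (\<Sum>t<T. g t 1 * w t 1 + g t 2 * w t 2) - (u1 * (\<Sum>t<T. g t 1) + u2 * (\<Sum>t<T. g t 2))"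
    by (simp add: algebra_simps sum.distrib sum_subtractf sum_distrib_left)
  also have "u1 * (\<Sum>t<T. g t 1) + u2 * (\<Sum>t<T. g t 2) = u1 * S T 1 + u2 * S T 2"
    using Ssum[of T 1] Ssum[of T 2] S0 by simp
  finally have E: "(\<Sum>t<T. g t 1 * (w t 1 - u1) + g t 2 * (w t 2 - u2)) = (\<Sum>t<T. g t 1 * w t 1 + g t 2 * w t 2) - (u1 * S T 1 + u2 * S T 2)" .
  have "sqrt (real (C T)) \<le> sqrt (1 + real (C T))" by simp
  hence "2 * G * sqrt (C T) \<le> 2 * G * sqrt (1 + real (C T))" using G by simp
  thus ?thesis using E A P L by linarith
qed


lemma expconc_concave:
  fixes y r :: real assumes r: "r > 0"
  shows "concave_on {y - r .. y + r} (\<lambda>z. exp (- (1/(2*r\<^sup>2)) * (y - z)\<^sup>2))"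
proof (rule f''_le0_imp_concave[where f' = "\<lambda>z. exp (- (1/(2*r\<^sup>2)) * (y - z)\<^sup>2) * ((1/(r\<^sup>2)) * (y - z))"
      and f'' = "\<lambda>z. exp (- (1/(2*r\<^sup>2)) * (y - z)\<^sup>2) * ((1/(r\<^sup>2)) * (y - z)) * ((1/(r\<^sup>2)) * (y - z)) - exp (- (1/(2*r\<^sup>2)) * (y - z)\<^sup>2) * (1/r\<^sup>2)"])
  show "convex {y - r..y + r}" by simp
  fix z :: real assume z: "z \<in> {y - r..y + r}"
  show "((\<lambda>z. exp (- (1/(2*r\<^sup>2)) * (y - z)\<^sup>2)) has_real_derivative exp (- (1/(2*r\<^sup>2)) * (y - z)\<^sup>2) * ((1/(r\<^sup>2)) * (y - z))) (at z)"
    apply (rule derivative_eq_intros refl | simp)+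
    using r by (simp add: power2_eq_square divide_simps; algebra)
  show "((\<lambda>z. exp (- (1/(2*r\<^sup>2)) * (y - z)\<^sup>2) * ((1/(r\<^sup>2)) * (y - z))) has_real_derivative
     exp (- (1/(2*r\<^sup>2)) * (y - z)\<^sup>2) * ((1/(r\<^sup>2)) * (y - z)) * ((1/(r\<^sup>2)) * (y - z)) - exp (- (1/(2*r\<^sup>2)) * (y - z)\<^sup>2) * (1/r\<^sup>2)) (at z)"
    apply (rule derivative_eq_intros refl | simp)+
    using r by (simp add: power2_eq_square divide_simps; algebra)
  have "(y - z)\<^sup>2 \<le> r\<^sup>2" using z r by (simp add: abs_le_square_iff[symmetric] abs_le_iff) 
  hence "(y-z)\<^sup>2/(r\<^sup>2*r\<^sup>2) \<le> r\<^sup>2/(r\<^sup>2*r\<^sup>2)" by (intro divide_right_mono) auto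
  moreover have "((1/(r\<^sup>2)) * (y - z)) * ((1/(r\<^sup>2)) * (y - z)) = (y-z)\<^sup>2/(r\<^sup>2*r\<^sup>2)"
    by (simp add: power2_eq_square)
  moreover have "r\<^sup>2/(r\<^sup>2*r\<^sup>2) = 1/r\<^sup>2" using r by (simp add: power2_eq_square)
  ultimately have "((1/(r\<^sup>2)) * (y - z)) * ((1/(r\<^sup>2)) * (y - z)) \<le> 1/r\<^sup>2" by (simp only:)
  then have "exp (- (1/(2*r\<^sup>2)) * (y - z)\<^sup>2) * (((1/(r\<^sup>2)) * (y - z)) * ((1/(r\<^sup>2)) * (y - z))) \<le> exp (- (1/(2*r\<^sup>2)) * (y - z)\<^sup>2) * (1/r\<^sup>2)"
    by (intro mult_left_mono) auto
  thus "exp (- (1/(2*r\<^sup>2)) * (y - z)\<^sup>2) * ((1/(r\<^sup>2)) * (y - z)) * ((1/(r\<^sup>2)) * (y - z)) - exp (- (1/(2*r\<^sup>2)) * (y - z)\<^sup>2) * (1/r\<^sup>2) \<le> 0"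
    by (simp only: mult.assoc)
qed

lemma mix_step:
  fixes y r :: real and A :: "nat set" and w p :: "nat \<Rightarrow> real"
  assumes r: "r > 0" and A: "finite A" "A \<noteq> {}" and w: "\<And>j. j \<in> A \<Longrightarrow> w j \<ge> 0" "sum w A = 1"
    and p: "\<And>j. j \<in> A \<Longrightarrow> \<bar>y - p j\<bar> \<le> r"
  shows "(y - (\<Sum>j\<in>A. w j * p j))\<^sup>2 \<le> - (2*r\<^sup>2) * ln (\<Sum>j\<in>A. w j * exp (- (1/(2*r\<^sup>2)) * (y - p j)\<^sup>2))"
proof -
  let ?phi = "\<lambda>z. exp (- (1/(2*r\<^sup>2)) * (y - z)\<^sup>2)"
  have pin: "p j \<in> {y - r .. y + r}" if "j \<in> A" for j using p[OF that] by (auto simp: abs_le_iff)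
  have J: "?phi (\<Sum>j\<in>A. w j *\<^sub>R p j) \<ge> (\<Sum>j\<in>A. w j * ?phi (p j))"
    by (rule concave_on_sum[OF A expconc_concave[OF r] w(2) w(1) pin])
  have pos: "(\<Sum>j\<in>A. w j * ?phi (p j)) > 0"
  proof -
    obtain j where j: "j \<in> A" "w j > 0"
      using w A by (metis less_eq_real_def sum.neutral zero_neq_one)
    have "w j * ?phi (p j) \<le> (\<Sum>j\<in>A. w j * ?phi (p j))"
      using j A w by (intro member_le_sum) auto
    moreover have "w j * ?phi (p j) > 0" using j by simp
    ultimately show ?thesis by linarith
  qed
  have "ln (\<Sum>j\<in>A. w j * ?phi (p j)) \<le> ln (?phi (\<Sum>j\<in>A. w j * p j))"
    using J pos by (subst ln_le_cancel_iff) auto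
  hence "ln (\<Sum>j\<in>A. w j * ?phi (p j)) \<le> - (1/(2*r\<^sup>2)) * (y - (\<Sum>j\<in>A. w j * p j))\<^sup>2" by simp
  hence "(2*r\<^sup>2) * ln (\<Sum>j\<in>A. w j * ?phi (p j)) \<le> (2*r\<^sup>2) * (- (1/(2*r\<^sup>2)) * (y - (\<Sum>j\<in>A. w j * p j))\<^sup>2)"
    using r by (intro mult_left_mono) auto
  thus ?thesis using r by (simp add: field_simps)
qed

lemma agg_regret:
  fixes r :: real and P :: "nat \<Rightarrow> bool" and y :: "nat \<Rightarrow> real" and p :: "nat \<Rightarrow> nat \<Rightarrow> real"
    and J T j0 :: nat
  assumes r: "r > 0" and j0: "j0 \<le> J"
    and bnd: "\<And>t j. 1 \<le> t \<Longrightarrow> t \<le> T \<Longrightarrow> P t \<Longrightarrow> j \<le> J \<Longrightarrow> \<bar>y t - p t j\<bar> \<le> r"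
  defines "L \<equiv> \<lambda>t j. (\<Sum>s\<in>{s. 1 \<le> s \<and> s < t \<and> P s}. (y s - p s j)\<^sup>2)"
  defines "W \<equiv> \<lambda>t. (\<Sum>j=0..J. exp (- (1/(2*r\<^sup>2)) * L t j))"
  defines "yh \<equiv> \<lambda>t. (\<Sum>j=0..J. (exp (- (1/(2*r\<^sup>2)) * L t j) / W t) * p t j)"
  shows "(\<Sum>t\<in>{t. 1 \<le> t \<and> t \<le> T \<and> P t}. (y t - yh t)\<^sup>2) \<le> L (T+1) j0 + 2*r\<^sup>2 * ln (real J + 1)"
proof -
  define eta where "eta = 1/(2*r\<^sup>2)"
  have eta: "eta > 0" using r by (simp add: eta_def)
  have Wpos: "\<And>t. W t > 0" unfolding W_def by (intro sum_pos) auto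
  have fin: "finite {s. 1 \<le> s \<and> s < t \<and> (P s)}" for t by (rule finite_subset[of _ "{..<t}"]) auto
  have claim: "n \<le> T \<Longrightarrow> (\<Sum>t\<in>{t. 1 \<le> t \<and> t \<le> n \<and> P t}. (y t - yh t)\<^sup>2) \<le> 2*r\<^sup>2 * (ln (W 1) - ln (W (n+1)))" for n
  proof (induction n)
    case 0
    have e: "{t. 1 \<le> t \<and> t \<le> (0::nat) \<and> P t} = {}" by auto
    show ?case unfolding e by simp
  next
    case (Suc n)
    have IH: "(\<Sum>t\<in>{t. 1 \<le> t \<and> t \<le> n \<and> P t}. (y t - yh t)\<^sup>2) \<le> 2*r\<^sup>2 * (ln (W 1) - ln (W (n+1)))"
      using Suc by simp
    show ?case
    proof (cases "P (Suc n)")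
      case False
      have e1: "{t. 1 \<le> t \<and> t \<le> Suc n \<and> P t} = {t. 1 \<le> t \<and> t \<le> n \<and> P t}"
        using False le_Suc_eq by auto
      have e2: "{s. 1 \<le> s \<and> s < Suc n + 1 \<and> P s} = {s. 1 \<le> s \<and> s < n + 1 \<and> P s}"
        using False less_Suc_eq by auto
      have "W (Suc n + 1) = W (n + 1)" unfolding W_def L_def e2 ..
      thus ?thesis using IH e1 by simp
    next
      case True
      have e1: "{t. 1 \<le> t \<and> t \<le> Suc n \<and> P t} = insert (Suc n) {t. 1 \<le> t \<and> t \<le> n \<and> P t}"
        using True le_Suc_eq by auto
      have e2: "{s. 1 \<le> s \<and> s < Suc n + 1 \<and> P s} = insert (Suc n) {s. 1 \<le> s \<and> s < n + 1 \<and> P s}"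
        using True less_Suc_eq by auto
      have Lstep: "L (Suc n + 1) j = L (n+1) j + (y (Suc n) - p (Suc n) j)\<^sup>2" for j
        unfolding L_def e2 using fin[of "n+1"] by (subst sum.insert) auto
      define w where "w j = exp (- eta * L (Suc n) j) / W (Suc n)" for j
      have wnn: "\<And>j. j \<in> {0..J} \<Longrightarrow> w j \<ge> 0" using Wpos[of "Suc n"] by (auto simp: w_def intro!: divide_nonneg_pos)
      have wsum: "sum w {0..J} = 1" using Wpos[of "Suc n"] unfolding w_def sum_divide_distrib[symmetric]
        by (simp add: W_def eta_def)
      have pb: "\<And>j. j \<in> {0..J} \<Longrightarrow> \<bar>y (Suc n) - p (Suc n) j\<bar> \<le> r" using bnd[of "Suc n"] Suc.prems True by simp
      have yhe: "yh (Suc n) = (\<Sum>j\<in>{0..J}. w j * p (Suc n) j)" unfolding yh_def w_def eta_def by simp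
      have mix: "(y (Suc n) - yh (Suc n))\<^sup>2 \<le> - (2*r\<^sup>2) * ln (\<Sum>j\<in>{0..J}. w j * exp (- eta * (y (Suc n) - p (Suc n) j)\<^sup>2))"
        unfolding yhe eta_def by (rule mix_step[OF r _ _ wnn wsum pb]) auto
      have Wst: "W (Suc n + 1) = W (Suc n) * (\<Sum>j\<in>{0..J}. w j * exp (- eta * (y (Suc n) - p (Suc n) j)\<^sup>2))"
      proof -
        have "W (Suc n + 1) = (\<Sum>j=0..J. exp (- eta * L (Suc n) j) * exp (- eta * (y (Suc n) - p (Suc n) j)\<^sup>2))"
          unfolding W_def Lstep eta_def by (simp add: exp_add[symmetric] algebra_simps)
        also have "\<dots> = W (Suc n) * (\<Sum>j\<in>{0..J}. w j * exp (- eta * (y (Suc n) - p (Suc n) j)\<^sup>2))"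
          using Wpos[of "Suc n"] unfolding w_def by (simp add: sum_distrib_left)
        finally show ?thesis .
      qed
      have Spos: "(\<Sum>j\<in>{0..J}. w j * exp (- eta * (y (Suc n) - p (Suc n) j)\<^sup>2)) > 0"
        using Wst Wpos[of "Suc n + 1"] Wpos[of "Suc n"] by (metis zero_less_mult_pos)
      have lnW: "ln (W (Suc n + 1)) = ln (W (Suc n)) + ln (\<Sum>j\<in>{0..J}. w j * exp (- eta * (y (Suc n) - p (Suc n) j)\<^sup>2))"
        unfolding Wst using Wpos Spos by (simp add: ln_mult_pos)
      have fin2: "finite {t. 1 \<le> t \<and> t \<le> n \<and> P t}" by (rule finite_subset[of _ "{..n}"]) auto
      have "(\<Sum>t\<in>{t. 1 \<le> t \<and> t \<le> Suc n \<and> P t}. (y t - yh t)\<^sup>2) = (\<Sum>t\<in>{t. 1 \<le> t \<and> t \<le> n \<and> P t}. (y t - yh t)\<^sup>2) + (y (Suc n) - yh (Suc n))\<^sup>2"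
        unfolding e1 using fin2 by (subst sum.insert) auto
      also have "\<dots> \<le> 2*r\<^sup>2 * (ln (W 1) - ln (W (n+1))) - (2*r\<^sup>2) * ln (\<Sum>j\<in>{0..J}. w j * exp (- eta * (y (Suc n) - p (Suc n) j)\<^sup>2))"
        using IH mix by linarith
      also have "\<dots> = 2*r\<^sup>2 * (ln (W 1) - ln (W (Suc n + 1)))" unfolding lnW by (simp add: algebra_simps)
      finally show ?thesis .
    qed
  qed
  have A: "(\<Sum>t\<in>{t. 1 \<le> t \<and> t \<le> T \<and> P t}. (y t - yh t)\<^sup>2) \<le> 2*r\<^sup>2 * (ln (W 1) - ln (W (T+1)))"
    using claim by simp
  have W1: "W 1 = real J + 1"
  proof -
    have e: "{s. 1 \<le> s \<and> s < (1::nat) \<and> P s} = {}" by auto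
    show ?thesis unfolding W_def L_def e by simp
  qed
  have "exp (- eta * L (T+1) j0) \<le> W (T+1)" unfolding W_def eta_def
    using j0 by (intro member_le_sum) auto
  hence "ln (exp (- eta * L (T+1) j0)) \<le> ln (W (T+1))" using Wpos by (subst ln_le_cancel_iff) auto
  hence lw: "- eta * L (T+1) j0 \<le> ln (W (T+1))" by simp
  have "2*r\<^sup>2 * (ln (W 1) - ln (W (T+1))) \<le> 2*r\<^sup>2 * (ln (real J + 1) + eta * L (T+1) j0)"
    unfolding W1 using lw r by (intro mult_left_mono) auto
  also have "\<dots> = L (T+1) j0 + 2*r\<^sup>2 * ln (real J + 1)" using r by (simp add: eta_def algebra_simps)
  finally show ?thesis using A by linarith
qed


definition rho :: "real \<Rightarrow> nat \<Rightarrow> nat \<Rightarrow> real \<Rightarrow> real" where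
  "rho \<gamma> a m z = (z - (real a - 1) * \<gamma>) * 2 ^ m / \<gamma>"

definition idx :: "real \<Rightarrow> nat \<Rightarrow> nat \<Rightarrow> real \<Rightarrow> nat" where
  "idx \<gamma> a m z = (if rho \<gamma> a m z \<ge> 2 ^ m then 2 ^ m else nat \<lfloor>rho \<gamma> a m z\<rfloor> + 1)"

lemma dcI_bounds:
  assumes "z \<in> dc_I \<gamma> a"
  shows "(real a - 1) * \<gamma> \<le> z" "z \<le> real a * \<gamma>" "z = real a * \<gamma> \<Longrightarrow> real a * \<gamma> = 1"
  using assms by (auto simp: dc_I_def split: if_splits)

lemma z_rho: assumes "\<gamma> > 0" shows "z = (real a - 1) * \<gamma> + rho \<gamma> a m z * \<gamma> / 2 ^ m"
  using assms by (simp add: rho_def)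

lemma rho_bounds:
  assumes g: "\<gamma> > 0" and z: "z \<in> dc_I \<gamma> a"
  shows "0 \<le> rho \<gamma> a m z" "rho \<gamma> a m z \<le> 2 ^ m"
    "rho \<gamma> a m z = 2 ^ m \<Longrightarrow> real a * \<gamma> = 1"
proof -
  have b: "(real a - 1) * \<gamma> \<le> z" "z \<le> real a * \<gamma>" using dcI_bounds[OF z] by auto
  show "0 \<le> rho \<gamma> a m z" using b g unfolding rho_def by (intro divide_nonneg_pos) auto
  have "(z - (real a - 1) * \<gamma>) \<le> \<gamma>" using b by (simp add: algebra_simps)
  hence "(z - (real a - 1) * \<gamma>) * 2 ^ m \<le> \<gamma> * 2 ^ m" by (intro mult_right_mono) auto
  thus "rho \<gamma> a m z \<le> 2 ^ m" using g unfolding rho_def by (simp add: divide_le_eq mult.commute)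
  assume "rho \<gamma> a m z = 2 ^ m"
  hence "(z - (real a - 1) * \<gamma>) * 2 ^ m = 2 ^ m * \<gamma>" using g unfolding rho_def by (simp add: divide_eq_eq)
  hence "z - (real a - 1) * \<gamma> = \<gamma>" by (simp add: mult.commute)
  hence "z = real a * \<gamma>" by (simp add: algebra_simps)
  thus "real a * \<gamma> = 1" using dcI_bounds(3)[OF z] by simp
qed

lemma sub_iff:
  assumes g: "\<gamma> > 0" and z: "z \<in> dc_I \<gamma> a" and n: "1 \<le> n" "n \<le> 2 ^ m"
  shows "z \<in> dc_sub \<gamma> a m n \<longleftrightarrow> n = idx \<gamma> a m z"
proof -
  define r where "r = rho \<gamma> a m z"
  have r0: "0 \<le> r" "r \<le> 2^m" using rho_bounds[OF g z] by (auto simp: r_def)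
  have zr: "z = (real a - 1) * \<gamma> + r * \<gamma> / 2 ^ m" using z_rho[OF g] by (simp add: r_def)
  have lo: "(real a - 1) * \<gamma> + (real n - 1) * \<gamma> / 2 ^ m \<le> z \<longleftrightarrow> real n - 1 \<le> r"
    unfolding zr using g by (simp add: divide_le_cancel mult_le_cancel_right)
  have hi1: "z < (real a - 1) * \<gamma> + real n * \<gamma> / 2 ^ m \<longleftrightarrow> r < real n"
    unfolding zr using g by (simp add: divide_less_cancel mult_less_cancel_right)
  have hi2: "z \<le> (real a - 1) * \<gamma> + real n * \<gamma> / 2 ^ m \<longleftrightarrow> r \<le> real n"
    unfolding zr using g by (simp add: divide_le_cancel mult_le_cancel_right)
  have mem: "z \<in> dc_sub \<gamma> a m n \<longleftrightarrow> real n - 1 \<le> r \<and> (if n = 2^m then r \<le> real n else r < real n)"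
    unfolding dc_sub_def Let_def using z lo hi1 hi2 by auto
  have idxr: "idx \<gamma> a m z = (if r \<ge> 2 ^ m then 2 ^ m else nat \<lfloor>r\<rfloor> + 1)"
    by (simp add: idx_def r_def)
  show ?thesis
  proof
    assume A: "z \<in> dc_sub \<gamma> a m n"
    show "n = idx \<gamma> a m z"
    proof (cases "r \<ge> 2^m")
      case True
      hence "r = 2^m" using r0 by simp
      have "n = 2^m"
      proof (rule ccontr)
        assume "n \<noteq> 2^m"
        hence "r < real n" using A mem by auto
        moreover have "real n \<le> 2^m" using n(2) by (metis of_nat_le_iff of_nat_numeral of_nat_power)
        ultimately show False using \<open>r = 2^m\<close> by simp
      qed
      thus ?thesis using idxr True by simp
    next
      case False
      have "\<lfloor>r\<rfloor> = int n - 1" using A mem n False by (auto simp: floor_eq_iff split: if_splits)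
      thus ?thesis using idxr False n by simp
    qed
  next
    assume B: "n = idx \<gamma> a m z"
    show "z \<in> dc_sub \<gamma> a m n"
    proof (cases "r \<ge> 2^m")
      case True
      hence "n = 2^m" "r = 2^m" using B idxr r0 by auto
      thus ?thesis using mem by simp
    next
      case False
      hence nn: "n = nat \<lfloor>r\<rfloor> + 1" using B idxr by simp
      have rn: "real n = real_of_int \<lfloor>r\<rfloor> + 1" using nn r0 by (simp add: of_nat_nat)
      have "real n - 1 \<le> r" "r < real n" using rn real_of_int_floor_add_one_gt[of r] of_int_floor_le[of r] by linarith+
      thus ?thesis using mem by auto
    qed
  qed
qed

lemma idx_range:
  assumes g: "\<gamma> > 0" and z: "z \<in> dc_I \<gamma> a"
  shows "1 \<le> idx \<gamma> a m z" "idx \<gamma> a m z \<le> 2 ^ m"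
proof -
  define r where "r = rho \<gamma> a m z"
  have r0: "0 \<le> r" "r \<le> 2^m" using rho_bounds[OF g z] by (auto simp: r_def)
  show "1 \<le> idx \<gamma> a m z" by (simp add: idx_def)
  show "idx \<gamma> a m z \<le> 2 ^ m"
  proof (cases "r \<ge> 2^m")
    case True thus ?thesis by (simp add: idx_def r_def)
  next
    case False
    have "real_of_int \<lfloor>r\<rfloor> \<le> r" by simp
    hence "real_of_int \<lfloor>r\<rfloor> < 2^m" using False by linarith
    hence "\<lfloor>r\<rfloor> < 2^m" by (metis of_int_less_iff of_int_numeral of_int_power)
    moreover have "int (nat \<lfloor>r\<rfloor>) = \<lfloor>r\<rfloor>" using r0 by simp
    ultimately have "int (nat \<lfloor>r\<rfloor>) < int (2^m)" by simp
    hence "nat \<lfloor>r\<rfloor> < 2^m" by (simp only: of_nat_less_iff)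
    moreover have "idx \<gamma> a m z = nat \<lfloor>r\<rfloor> + 1" using False by (simp add: idx_def r_def)
    ultimately show ?thesis by linarith
  qed
qed

lemma idx_nest:
  assumes g: "\<gamma> > 0" and z: "z \<in> dc_I \<gamma> a" and m: "m \<ge> 1"
  shows "idx \<gamma> a (m - 1) z = (idx \<gamma> a m z + 1) div 2"
proof -
  obtain k where k: "m = Suc k" using m by (cases m) auto
  define r where "r = rho \<gamma> a (Suc k) z"
  have r0: "0 \<le> r" "r \<le> 2^Suc k" using rho_bounds[OF g z, of "Suc k"] by (auto simp: r_def)
  have rk: "rho \<gamma> a k z = r / 2" unfolding r_def rho_def by simp
  show ?thesis
  proof (cases "r \<ge> 2 ^ Suc k")
    case True
    hence "rho \<gamma> a k z \<ge> 2 ^ k" using rk by simp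
    thus ?thesis using True k by (simp add: idx_def r_def)
  next
    case False
    hence "rho \<gamma> a k z < 2 ^ k" using rk by simp
    hence i1: "idx \<gamma> a k z = nat \<lfloor>r / 2\<rfloor> + 1" unfolding idx_def rk by simp
    have i2: "idx \<gamma> a m z = nat \<lfloor>r\<rfloor> + 1" using False k by (simp add: idx_def r_def)
    have "\<lfloor>r / 2\<rfloor> = \<lfloor>r\<rfloor> div 2" using floor_divide_real_eq_div[of 2 r] by simp
    hence "nat \<lfloor>r / 2\<rfloor> = nat \<lfloor>r\<rfloor> div 2" using r0 by (simp add: nat_div_distrib)
    thus ?thesis using i1 i2 k by simp
  qed
qed

lemma blocks_sum_idx:
  fixes h :: "nat \<Rightarrow> nat \<Rightarrow> real"
  assumes g: "\<gamma> > 0" and z: "z \<in> dc_I \<gamma> a"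
  shows "(\<Sum>(m, n)\<in>dc_blocks M. h m n * indicator (dc_sub \<gamma> a m n) z) = (\<Sum>m=1..M. h m (idx \<gamma> a m z))"
proof -
  have bl: "dc_blocks M = Sigma {1..M} (\<lambda>m. {1..2^m})" by (auto simp: dc_blocks_def)
  have "(\<Sum>(m, n)\<in>dc_blocks M. h m n * indicator (dc_sub \<gamma> a m n) z) = (\<Sum>m=1..M. \<Sum>n=1..2^m. h m n * indicator (dc_sub \<gamma> a m n) z)"
    unfolding bl by (subst sum.Sigma) auto
  also have "\<dots> = (\<Sum>m=1..M. h m (idx \<gamma> a m z))"
  proof (rule sum.cong[OF refl])
    fix m
    have "(\<Sum>n=1..2^m. h m n * indicator (dc_sub \<gamma> a m n) z) = (\<Sum>n=1..2^m. if n = idx \<gamma> a m z then h m n else 0)"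
      by (rule sum.cong[OF refl]) (use sub_iff[OF g z] in \<open>auto simp: indicator_def\<close>)
    also have "\<dots> = h m (idx \<gamma> a m z)" using idx_range[OF g z, of m] by (simp add: sum.delta)
    finally show "(\<Sum>n=1..2^m. h m n * indicator (dc_sub \<gamma> a m n) z) = h m (idx \<gamma> a m z)" .
  qed
  finally show ?thesis .
qed


lemma geom_sum: "(\<Sum>m=1..M. (1::real) / 2 ^ (m - 1)) = 2 - 2 / 2 ^ M"
proof (induction M)
  case 0 then show ?case by simp
next
  case (Suc M)
  have "(\<Sum>m=1..Suc M. (1::real) / 2 ^ (m - 1)) = (\<Sum>m=1..M. (1::real) / 2 ^ (m - 1)) + 1 / 2 ^ M"
    by simp
  also have "\<dots> = 2 - 2 / 2 ^ Suc M" using Suc by (simp add: field_simps)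
  finally show ?case .
qed

lemma dc_f_idx:
  assumes g: "\<gamma> > 0" and z: "z \<in> dc_I \<gamma> a"
  shows "dc_f B \<gamma> M a j u z = - B + real j * \<gamma> +
    (\<Sum>m=1..M. u (m, idx \<gamma> a m z) 1 * (- \<gamma> / 2 ^ (m - 1)) + u (m, idx \<gamma> a m z) 2 * (\<gamma> / 2 ^ (m - 1)))"
  unfolding dc_f_def
  using blocks_sum_idx[OF g z, where M=M and h="\<lambda>m n. u (m, n) 1 * (- \<gamma> / 2 ^ (m - 1)) + u (m, n) 2 * (\<gamma> / 2 ^ (m - 1))"]
  by simp

definition simp2 :: "(nat \<times> nat) set \<Rightarrow> (nat \<times> nat \<Rightarrow> nat \<Rightarrow> real) \<Rightarrow> bool" where
  "simp2 K u = (\<forall>k\<in>K. 0 \<le> u k 1 \<and> 0 \<le> u k 2 \<and> u k 1 + u k 2 = 1)"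

lemma simplex_prod_2: "u \<in> simplex_prod K (\<lambda>_. 2) \<longleftrightarrow> simp2 K u"
proof -
  have s: "{1..2::nat} = {1,2}" by auto
  show ?thesis unfolding simplex_prod_def simp2_def s by auto
qed

lemma dc_f_bound:
  assumes g: "\<gamma> > 0" and z: "z \<in> dc_I \<gamma> a" and u: "simp2 (dc_blocks M) u"
  shows "\<bar>dc_f B \<gamma> M a j u z - (- B + real j * \<gamma>)\<bar> \<le> 2 * \<gamma>"
proof -
  have "\<bar>\<Sum>m=1..M. u (m, idx \<gamma> a m z) 1 * (- \<gamma> / 2 ^ (m - 1)) + u (m, idx \<gamma> a m z) 2 * (\<gamma> / 2 ^ (m - 1))\<bar>
      \<le> (\<Sum>m=1..M. \<bar>u (m, idx \<gamma> a m z) 1 * (- \<gamma> / 2 ^ (m - 1)) + u (m, idx \<gamma> a m z) 2 * (\<gamma> / 2 ^ (m - 1))\<bar>)"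
    by (rule sum_abs)
  also have "\<dots> \<le> (\<Sum>m=1..M. \<gamma> * (1 / 2 ^ (m - 1)))"
  proof (rule sum_mono)
    fix m assume m: "m \<in> {1..M}"
    have kb: "(m, idx \<gamma> a m z) \<in> dc_blocks M" using m idx_range[OF g z, of m] by (auto simp: dc_blocks_def)
    define p where "p = u (m, idx \<gamma> a m z) 1"
    define q where "q = u (m, idx \<gamma> a m z) 2"
    have pq: "0 \<le> p" "0 \<le> q" "p + q = 1" using u kb unfolding simp2_def p_def q_def by auto
    have e: "p * (- \<gamma> / 2 ^ (m - 1)) + q * (\<gamma> / 2 ^ (m - 1)) = (q - p) * (\<gamma> / 2 ^ (m - 1))" by (simp add: field_simps)
    have "\<bar>(q - p) * (\<gamma> / 2 ^ (m - 1))\<bar> = \<bar>q - p\<bar> * (\<gamma> / 2 ^ (m - 1))" using g by (simp add: abs_mult)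
    also have "\<dots> \<le> 1 * (\<gamma> / 2 ^ (m - 1))" using pq g by (intro mult_right_mono) auto
    finally show "\<bar>u (m, idx \<gamma> a m z) 1 * (- \<gamma> / 2 ^ (m - 1)) + u (m, idx \<gamma> a m z) 2 * (\<gamma> / 2 ^ (m - 1))\<bar> \<le> \<gamma> * (1 / 2 ^ (m - 1))"
      unfolding p_def[symmetric] q_def[symmetric] e by simp
  qed
  also have "\<dots> = \<gamma> * (2 - 2 / 2 ^ M)" by (simp only: sum_distrib_left[symmetric] geom_sum)
  also have "\<dots> \<le> 2 * \<gamma>" using g by (simp add: algebra_simps)
  finally show ?thesis using dc_f_idx[OF g z] by simp
qed

definition coef :: "real \<Rightarrow> nat \<Rightarrow> nat \<Rightarrow> real" where
  "coef \<gamma> m i = (if i = 1 then - \<gamma> / 2 ^ (m - 1) else \<gamma> / 2 ^ (m - 1))"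

lemma dc_f_upd:
  assumes k: "k \<in> dc_blocks M" and i: "i \<in> {1,2}"
  shows "dc_f B \<gamma> M a j (u(k := (u k)(i := v))) z = dc_f B \<gamma> M a j u z + (v - u k i) * coef \<gamma> (fst k) i * indicator (dc_sub \<gamma> a (fst k) (snd k)) z"
proof -
  let ?F = "\<lambda>u (m::nat) (n::nat). (u (m, n) 1 * (- \<gamma> / 2 ^ (m - 1)) + u (m, n) 2 * (\<gamma> / 2 ^ (m - 1))) * indicator (dc_sub \<gamma> a m n) z"
  let ?u' = "u(k := (u k)(i := v))"
  have fin: "finite (dc_blocks M)"
  proof (rule finite_subset[of _ "{0..M} \<times> {0..2^M}"])
    show "dc_blocks M \<subseteq> {0..M} \<times> {0..2^M}"
    proof
      fix p assume "p \<in> dc_blocks M"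
      then obtain m n where p: "p = (m, n)" "m \<le> M" "n \<le> 2^m" by (auto simp: dc_blocks_def)
      have "(2::nat)^m \<le> 2^M" using p(2) by (intro power_increasing) auto
      thus "p \<in> {0..M} \<times> {0..2^M}" using p by (auto intro: order_trans)
    qed
  qed simp
  have "(\<Sum>(m, n)\<in>dc_blocks M. ?F ?u' m n) - (\<Sum>(m, n)\<in>dc_blocks M. ?F u m n) = (\<Sum>(m, n)\<in>dc_blocks M. ?F ?u' m n - ?F u m n)"
    by (simp add: sum_subtractf[symmetric] case_prod_beta)
  also have "\<dots> = (\<Sum>k'\<in>dc_blocks M. if k' = k then (v - u k i) * coef \<gamma> (fst k) i * indicator (dc_sub \<gamma> a (fst k) (snd k)) z else 0)"
  proof (rule sum.cong[OF refl])
    fix k' assume "k' \<in> dc_blocks M"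
    obtain m n where mn: "k' = (m, n)" by force
    show "(case k' of (m, n) \<Rightarrow> ?F ?u' m n - ?F u m n) = (if k' = k then (v - u k i) * coef \<gamma> (fst k) i * indicator (dc_sub \<gamma> a (fst k) (snd k)) z else 0)"
      using i by (cases "k' = k") (auto simp: mn coef_def algebra_simps)
  qed
  also have "\<dots> = (v - u k i) * coef \<gamma> (fst k) i * indicator (dc_sub \<gamma> a (fst k) (snd k)) z"
    using k fin by (simp add: sum.delta')
  finally show ?thesis unfolding dc_f_def by (simp add: algebra_simps)
qed

lemma partial_dc_loss:
  assumes k: "k \<in> dc_blocks M" and i: "i \<in> {1,2}"
  shows "partial_coord (dc_loss B \<gamma> M a j x y t) k i u =
     - 2 * (y t - dc_f B \<gamma> M a j u (x t)) * (coef \<gamma> (fst k) i * indicator (dc_sub \<gamma> a (fst k) (snd k)) (x t))"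
proof -
  define d where "d = coef \<gamma> (fst k) i * indicator (dc_sub \<gamma> a (fst k) (snd k)) (x t)"
  define F where "F = dc_f B \<gamma> M a j u (x t)"
  have eq: "(\<lambda>v. dc_loss B \<gamma> M a j x y t (u(k := (u k)(i := v)))) = (\<lambda>v. (y t - (F + (v - u k i) * d))\<^sup>2)"
    unfolding dc_loss_def dc_f_upd[OF k i] F_def d_def by (simp add: mult.assoc)
  have "((\<lambda>v. (y t - (F + (v - u k i) * d))\<^sup>2) has_real_derivative 2 * (y t - (F + (u k i - u k i) * d)) * (- d)) (at (u k i))"
    by (intro derivative_eq_intros) auto
  moreover have "2 * (y t - (F + (u k i - u k i) * d)) * (- d) = - 2 * (y t - F) * d" by (simp add: algebra_simps)
  ultimately have "((\<lambda>v. (y t - (F + (v - u k i) * d))\<^sup>2) has_real_derivative - 2 * (y t - F) * d) (at (u k i))"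
    by (simp only:)
  hence "deriv (\<lambda>v. (y t - (F + (v - u k i) * d))\<^sup>2) (u k i) = - 2 * (y t - F) * d"
    by (simp add: DERIV_imp_deriv)
  thus ?thesis unfolding partial_coord_def eq F_def d_def by simp
qed


lemma fin_blocks: "finite (dc_blocks M)"
proof (rule finite_subset[of _ "{0..M} \<times> {0..2^M}"])
  show "dc_blocks M \<subseteq> {0..M} \<times> {0..2^M}"
  proof
    fix p assume "p \<in> dc_blocks M"
    then obtain m n where p: "p = (m, n)" "m \<le> M" "n \<le> 2^m" by (auto simp: dc_blocks_def)
    have "(2::nat)^m \<le> 2^M" using p(2) by (intro power_increasing) auto
    thus "p \<in> {0..M} \<times> {0..2^M}" using p by (auto intro: order_trans)
  qed
qed simp

lemma dc_f_diff:
  "dc_f B \<gamma> M a j u z - dc_f B \<gamma> M a j v z =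
   (\<Sum>k\<in>dc_blocks M. (coef \<gamma> (fst k) 1 * (u k 1 - v k 1) + coef \<gamma> (fst k) 2 * (u k 2 - v k 2)) * indicator (dc_sub \<gamma> a (fst k) (snd k)) z)"
  (is "_ = ?rhs")
proof -
  have "dc_f B \<gamma> M a j u z - dc_f B \<gamma> M a j v z =
    (\<Sum>k\<in>dc_blocks M. (u k 1 * (- \<gamma> / 2 ^ (fst k - 1)) + u k 2 * (\<gamma> / 2 ^ (fst k - 1))) * indicator (dc_sub \<gamma> a (fst k) (snd k)) z)
  - (\<Sum>k\<in>dc_blocks M. (v k 1 * (- \<gamma> / 2 ^ (fst k - 1)) + v k 2 * (\<gamma> / 2 ^ (fst k - 1))) * indicator (dc_sub \<gamma> a (fst k) (snd k)) z)"
    unfolding dc_f_def by (simp add: case_prod_beta)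
  also have "\<dots> = (\<Sum>k\<in>dc_blocks M. (u k 1 * (- \<gamma> / 2 ^ (fst k - 1)) + u k 2 * (\<gamma> / 2 ^ (fst k - 1))) * indicator (dc_sub \<gamma> a (fst k) (snd k)) z
       - (v k 1 * (- \<gamma> / 2 ^ (fst k - 1)) + v k 2 * (\<gamma> / 2 ^ (fst k - 1))) * indicator (dc_sub \<gamma> a (fst k) (snd k)) z)"
    by (simp add: sum_subtractf)
  also have "\<dots> = ?rhs"
    by (rule sum.cong[OF refl]) (simp add: coef_def field_simps)
  finally show ?thesis .
qed

lemma weights_simp2:
  assumes "\<And>k. k \<in> K \<Longrightarrow> Gk k > 0"
  shows "simp2 K (ameg_weights K (\<lambda>_. 2) Gk S C)"
proof -
  have s: "{1..2::nat} = {1,2}" by auto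
  have ne: "\<And>p q::real. exp p + exp q \<noteq> 0" by (smt (verit) exp_gt_zero)
  show ?thesis unfolding simp2_def ameg_weights_def Let_def s
    by (auto simp: add_divide_distrib[symmetric] ne)
qed

lemma weights_eq:
  assumes "k \<in> K" "i \<in> {1,2}"
  shows "ameg_weights K (\<lambda>_. 2) Gk S C k i =
    exp (- (sqrt (ln 2 / (1 + real (C k))) / Gk k) * S k i) /
      (exp (- (sqrt (ln 2 / (1 + real (C k))) / Gk k) * S k 1) + exp (- (sqrt (ln 2 / (1 + real (C k))) / Gk k) * S k 2))"
proof -
  have s: "{1..2::nat} = {1,2}" by auto
  show ?thesis using assms unfolding ameg_weights_def Let_def s by auto
qed

lemma inst_regret:
  fixes B \<gamma> :: real and M a j T J :: nat and x y :: "nat \<Rightarrow> real" and us :: "nat \<times> nat \<Rightarrow> nat \<Rightarrow> real"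
  assumes g: "\<gamma> > 0" and B: "B > 0" "\<gamma> \<le> B" and J: "real J * \<gamma> = 2 * B" "j \<le> J"
    and yb: "\<And>t. 1 \<le> t \<Longrightarrow> t \<le> T \<Longrightarrow> x t \<in> dc_I \<gamma> a \<Longrightarrow> \<bar>y t\<bar> \<le> B"
    and us: "simp2 (dc_blocks M) us"
  shows "(\<Sum>t\<in>{t. 1 \<le> t \<and> t \<le> T \<and> x t \<in> dc_I \<gamma> a}.
            dc_loss B \<gamma> M a j x y t (dc_u B \<gamma> M a j x y t) - dc_loss B \<gamma> M a j x y t us)
         \<le> (\<Sum>k\<in>dc_blocks M. 3 * (16 * B * \<gamma> / 2 ^ fst k) * sqrt (1 + real (card {t. 1 \<le> t \<and> t \<le> T \<and> x t \<in> dc_I \<gamma> a})))"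
proof -
  define K where "K = dc_blocks M"
  define Gk :: "nat \<times> nat \<Rightarrow> real" where "Gk = (\<lambda>(m, n). 16 * B * \<gamma> / 2 ^ m)"
  define L where "L = dc_loss B \<gamma> M a j x y"
  define R where "R = dc_rounds \<gamma> a x"
  define st where "st t = ameg_state K (\<lambda>_. 2) Gk L R t" for t
  define S where "S t = fst (st t)" for t
  define C where "C t = snd (st t)" for t
  define u where "u t = dc_u B \<gamma> M a j x y t" for t
  define na where "na = card {t. 1 \<le> t \<and> t \<le> T \<and> x t \<in> dc_I \<gamma> a}"
  have Gkpos: "\<And>k. Gk k > 0" using g B by (auto simp: Gk_def)
  have U: "u t = ameg_weights K (\<lambda>_. 2) Gk (S t) (C t)" for t
    unfolding u_def dc_u_def ameg_out_def S_def C_def st_def K_def Gk_def L_def R_def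
    by (simp add: case_prod_beta)
  have usimp: "simp2 K (u t)" for t unfolding U using Gkpos by (intro weights_simp2) auto
  have recS: "S (Suc t) k i = S t k i + (if t \<in> R then partial_coord (L t) k i (u t) else 0)" for t k i
    unfolding S_def st_def U C_def by (cases "ameg_state K (\<lambda>_. 2) Gk L R t") (simp add: Let_def)
  have recC: "C (Suc t) k = C t k + (if t \<in> R \<and> ameg_active K (\<lambda>_. 2) (L t) k then 1 else 0)" for t k
    unfolding C_def st_def U S_def by (cases "ameg_state K (\<lambda>_. 2) Gk L R t") (simp add: Let_def)
  have S0: "S 0 k i = 0" for k i by (simp add: S_def st_def)
  have C0: "C 0 k = 0" for k by (simp add: C_def st_def)
  define gr where "gr k t i = (if t \<in> R then partial_coord (L t) k i (u t) else 0)" for k t i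
  have Rmem: "t \<in> R \<longleftrightarrow> 1 \<le> t \<and> x t \<in> dc_I \<gamma> a" for t by (simp add: R_def dc_rounds_def)
  have grf: "gr k t i = - 2 * (y t - dc_f B \<gamma> M a j (u t) (x t)) * (coef \<gamma> (fst k) i * indicator (dc_sub \<gamma> a (fst k) (snd k)) (x t))"
    if "t \<in> R" "k \<in> K" "i \<in> {1,2}" for k t i
    using that partial_dc_loss[of k M i B \<gamma> a j x y t "u t"] by (simp add: gr_def L_def K_def)
  have blk: "(\<Sum>t<T+1. gr k t 1 * (u t k 1 - us k 1) + gr k t 2 * (u t k 2 - us k 2)) \<le> 3 * Gk k * sqrt (1 + real (C (T+1) k))"
    if k: "k \<in> K" for k
  proof -
    obtain m n where kmn: "k = (m, n)" by force
    have m1: "m \<ge> 1" using k by (simp add: K_def dc_blocks_def kmn)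
    have Gkk: "Gk k = 16 * B * \<gamma> / 2 ^ m" by (simp add: Gk_def kmn)
    have gb: "\<bar>gr k t i\<bar> \<le> Gk k" if t: "t < T + 1" "i \<in> {1,2}" for t i
    proof (cases "t \<in> R")
      case False thus ?thesis using Gkpos[of k] by (simp add: gr_def)
    next
      case True
      have tI: "x t \<in> dc_I \<gamma> a" "1 \<le> t" "t \<le> T" using True t Rmem by auto
      have fb: "\<bar>dc_f B \<gamma> M a j (u t) (x t) - (- B + real j * \<gamma>)\<bar> \<le> 2 * \<gamma>"
        using dc_f_bound[OF g tI(1)] usimp[of t] by (simp add: K_def)
      have "real j * \<gamma> \<le> real J * \<gamma>" using J(2) g by (intro mult_right_mono) auto
      hence jb: "0 \<le> real j * \<gamma>" "real j * \<gamma> \<le> 2 * B" using J g by auto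
      have yf: "\<bar>y t - dc_f B \<gamma> M a j (u t) (x t)\<bar> \<le> 4 * B"
      proof -
        have y1: "\<bar>y t\<bar> \<le> B" using yb[OF tI(2,3,1)] .
        show ?thesis unfolding abs_le_iff using abs_le_D1[OF fb] abs_le_D2[OF fb] abs_le_D1[OF y1] abs_le_D2[OF y1] jb B
          by linarith
      qed
      have cb: "\<bar>coef \<gamma> m i\<bar> = \<gamma> / 2 ^ (m - 1)" using g by (simp add: coef_def)
      have ib: "\<bar>indicator (dc_sub \<gamma> a m n) (x t)\<bar> \<le> (1::real)" by (simp add: indicator_def)
      have "\<bar>gr k t i\<bar> = \<bar>- 2 * (y t - dc_f B \<gamma> M a j (u t) (x t))\<bar> * (\<bar>coef \<gamma> m i\<bar> * \<bar>indicator (dc_sub \<gamma> a m n) (x t)\<bar>)"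
        using grf[OF True k t(2)] by (simp only: kmn fst_conv snd_conv abs_mult)
      also have "\<dots> = 2 * \<bar>y t - dc_f B \<gamma> M a j (u t) (x t)\<bar> * (\<bar>coef \<gamma> m i\<bar> * \<bar>indicator (dc_sub \<gamma> a m n) (x t)\<bar>)"
      proof -
        have "\<bar>- 2 * (y t - dc_f B \<gamma> M a j (u t) (x t))\<bar> = 2 * \<bar>y t - dc_f B \<gamma> M a j (u t) (x t)\<bar>"
          by (simp only: abs_mult)
        thus ?thesis by simp
      qed
      also have "\<dots> \<le> 2 * (4 * B) * ((\<gamma> / 2 ^ (m - 1)) * 1)"
      proof -
        have A: "(\<gamma> / 2 ^ (m - 1)) * \<bar>indicator (dc_sub \<gamma> a m n) (x t)\<bar> \<le> (\<gamma> / 2 ^ (m - 1)) * 1"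
          using ib g by (intro mult_left_mono) auto
        have B2: "2 * \<bar>y t - dc_f B \<gamma> M a j (u t) (x t)\<bar> \<le> 2 * (4 * B)" using yf by simp
        show ?thesis unfolding cb by (rule mult_mono[OF B2 A]) (use B g in auto)
      qed
      also have "\<dots> = 16 * B * \<gamma> / 2 ^ m"
      proof -
        have "(2::real) ^ m = 2 * 2 ^ (m - 1)" using m1 by (metis Suc_diff_1 less_le_trans zero_less_one power_Suc)
        thus ?thesis by (simp add: field_simps)
      qed
      finally show ?thesis using Gkk by simp
    qed
    have ga: "gr k t 1 = 0 \<and> gr k t 2 = 0" if "t < T + 1" "\<not> (t \<in> R \<and> ameg_active K (\<lambda>_. 2) (L t) k)" for t
    proof (cases "t \<in> R")
      case False thus ?thesis by (simp add: gr_def)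
    next
      case True
      hence na: "\<not> ameg_active K (\<lambda>_. 2) (L t) k" using that by simp
      have "u t \<in> simplex_prod K (\<lambda>_. 2)" using usimp simplex_prod_2 by blast
      thus ?thesis using na True unfolding ameg_active_def gr_def by auto
    qed
    have us': "us k 1 \<ge> 0" "us k 2 \<ge> 0" "us k 1 + us k 2 = 1" using us k by (auto simp: simp2_def K_def)
    have EG: "(\<Sum>t<T+1. gr k t 1 * ((\<lambda>t i. exp (- (sqrt (ln 2 / (1 + real (C t k))) / Gk k) * S t k i) /
      (exp (- (sqrt (ln 2 / (1 + real (C t k))) / Gk k) * S t k 1) + exp (- (sqrt (ln 2 / (1 + real (C t k))) / Gk k) * S t k 2))) t 1 - us k 1)
      + gr k t 2 * ((\<lambda>t i. exp (- (sqrt (ln 2 / (1 + real (C t k))) / Gk k) * S t k i) /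
      (exp (- (sqrt (ln 2 / (1 + real (C t k))) / Gk k) * S t k 1) + exp (- (sqrt (ln 2 / (1 + real (C t k))) / Gk k) * S t k 2))) t 2 - us k 2))
      \<le> 3 * Gk k * sqrt (1 + real (C (T+1) k))"
      by (rule EG_regret[where S="\<lambda>t i. S t k i" and C="\<lambda>t. C t k" and g="gr k"
           and act="\<lambda>t. t \<in> R \<and> ameg_active K (\<lambda>_. 2) (L t) k", OF Gkpos])
         (use recS recC gb ga S0 C0 us' in \<open>auto simp: gr_def\<close>)
    have wu: "u t k i = exp (- (sqrt (ln 2 / (1 + real (C t k))) / Gk k) * S t k i) /
      (exp (- (sqrt (ln 2 / (1 + real (C t k))) / Gk k) * S t k 1) + exp (- (sqrt (ln 2 / (1 + real (C t k))) / Gk k) * S t k 2))"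
      if "i \<in> {1,2}" for t i
      unfolding U using weights_eq[OF k that] by simp
    show ?thesis using EG wu[of 1] wu[of 2] by simp
  qed
  have Cb: "C t k \<le> card {s. 1 \<le> s \<and> s < t \<and> x s \<in> dc_I \<gamma> a}" for t k
  proof (induction t)
    case 0 show ?case by (simp add: C0)
  next
    case (Suc t)
    have fin: "finite {s. 1 \<le> s \<and> s < t \<and> x s \<in> dc_I \<gamma> a}" by (rule finite_subset[of _ "{..<t}"]) auto
    show ?case
    proof (cases "t \<in> R")
      case False
      hence "C (Suc t) k = C t k" using recC by simp
      moreover have "card {s. 1 \<le> s \<and> s < t \<and> x s \<in> dc_I \<gamma> a} \<le> card {s. 1 \<le> s \<and> s < Suc t \<and> x s \<in> dc_I \<gamma> a}"
        by (rule card_mono) (auto intro: finite_subset[of _ "{..<Suc t}"])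
      ultimately show ?thesis using Suc by simp
    next
      case True
      hence e: "{s. 1 \<le> s \<and> s < Suc t \<and> x s \<in> dc_I \<gamma> a} = insert t {s. 1 \<le> s \<and> s < t \<and> x s \<in> dc_I \<gamma> a}"
        using Rmem by auto
      have "C (Suc t) k \<le> C t k + 1" using recC by simp
      thus ?thesis unfolding e using Suc fin by simp
    qed
  qed
  have Cna: "C (T+1) k \<le> na" for k
  proof -
    have "{s. 1 \<le> s \<and> s < T + 1 \<and> x s \<in> dc_I \<gamma> a} = {t. 1 \<le> t \<and> t \<le> T \<and> x t \<in> dc_I \<gamma> a}" by auto
    thus ?thesis using Cb[of "T+1" k] by (simp add: na_def)
  qed
  have lin: "L t (u t) - L t us \<le> (\<Sum>k\<in>K. gr k t 1 * (u t k 1 - us k 1) + gr k t 2 * (u t k 2 - us k 2))"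
    if t: "t \<in> R" for t
  proof -
    define F where "F = dc_f B \<gamma> M a j (u t) (x t)"
    define F' where "F' = dc_f B \<gamma> M a j us (x t)"
    have "(\<Sum>k\<in>K. gr k t 1 * (u t k 1 - us k 1) + gr k t 2 * (u t k 2 - us k 2))
       = (\<Sum>k\<in>K. - 2 * (y t - F) * ((coef \<gamma> (fst k) 1 * (u t k 1 - us k 1) + coef \<gamma> (fst k) 2 * (u t k 2 - us k 2)) * indicator (dc_sub \<gamma> a (fst k) (snd k)) (x t)))"
      by (rule sum.cong[OF refl]) (simp add: grf[OF t] F_def algebra_simps)
    also have "\<dots> = - 2 * (y t - F) * (F - F')"
      unfolding F_def F'_def dc_f_diff K_def by (simp add: sum_distrib_left)
    finally have e: "(\<Sum>k\<in>K. gr k t 1 * (u t k 1 - us k 1) + gr k t 2 * (u t k 2 - us k 2)) = - 2 * (y t - F) * (F - F')" .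
    have "L t (u t) - L t us = (y t - F)\<^sup>2 - (y t - F')\<^sup>2" by (simp add: L_def dc_loss_def F_def F'_def)
    also have "\<dots> \<le> - 2 * (y t - F) * (F - F')"
    proof -
      have "0 \<le> (F - F')\<^sup>2" by simp
      thus ?thesis by (simp add: power2_eq_square algebra_simps)
    qed
    finally show ?thesis using e by simp
  qed
  have setR: "{t. 1 \<le> t \<and> t \<le> T \<and> x t \<in> dc_I \<gamma> a} = {t\<in>{..<T+1}. t \<in> R}" using Rmem by auto
  have "(\<Sum>t\<in>{t. 1 \<le> t \<and> t \<le> T \<and> x t \<in> dc_I \<gamma> a}. L t (u t) - L t us)
      \<le> (\<Sum>t\<in>{t\<in>{..<T+1}. t \<in> R}. \<Sum>k\<in>K. gr k t 1 * (u t k 1 - us k 1) + gr k t 2 * (u t k 2 - us k 2))"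
    unfolding setR by (rule sum_mono) (use lin in auto)
  also have "\<dots> = (\<Sum>t<T+1. \<Sum>k\<in>K. gr k t 1 * (u t k 1 - us k 1) + gr k t 2 * (u t k 2 - us k 2))"
  proof -
    have "(\<Sum>t<T+1. \<Sum>k\<in>K. gr k t 1 * (u t k 1 - us k 1) + gr k t 2 * (u t k 2 - us k 2))
      = (\<Sum>t<T+1. if t \<in> R then (\<Sum>k\<in>K. gr k t 1 * (u t k 1 - us k 1) + gr k t 2 * (u t k 2 - us k 2)) else 0)"
      by (rule sum.cong[OF refl]) (simp add: gr_def)
    moreover have "(\<Sum>t\<in>{t\<in>{..<T+1}. t \<in> R}. \<Sum>k\<in>K. gr k t 1 * (u t k 1 - us k 1) + gr k t 2 * (u t k 2 - us k 2))
      = (\<Sum>t<T+1. if t \<in> R then (\<Sum>k\<in>K. gr k t 1 * (u t k 1 - us k 1) + gr k t 2 * (u t k 2 - us k 2)) else 0)"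
      by (rule sum.inter_filter) simp
    ultimately show ?thesis by simp
  qed
  also have "\<dots> = (\<Sum>k\<in>K. \<Sum>t<T+1. gr k t 1 * (u t k 1 - us k 1) + gr k t 2 * (u t k 2 - us k 2))"
    by (rule sum.swap)
  also have "\<dots> \<le> (\<Sum>k\<in>K. 3 * Gk k * sqrt (1 + real na))"
  proof (rule sum_mono)
    fix k assume k: "k \<in> K"
    have "sqrt (1 + real (C (T+1) k)) \<le> sqrt (1 + real na)" using Cna[of k] by simp
    hence "3 * Gk k * sqrt (1 + real (C (T+1) k)) \<le> 3 * Gk k * sqrt (1 + real na)"
      using Gkpos[of k] by (intro mult_left_mono) auto
    thus "(\<Sum>t<T+1. gr k t 1 * (u t k 1 - us k 1) + gr k t 2 * (u t k 2 - us k 2)) \<le> 3 * Gk k * sqrt (1 + real na)"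
      using blk[OF k] by linarith
  qed
  finally show ?thesis unfolding L_def u_def K_def Gk_def na_def by (simp add: case_prod_beta)
qed


lemma lipD1: assumes "f \<in> lip1_class B" "z \<in> {0..1}" "w \<in> {0..1}"
  shows "\<bar>f z - f w\<bar> \<le> \<bar>z - w\<bar>"
  using assms by (auto simp: lip1_class_def)

lemma lipD2: assumes "f \<in> lip1_class B" "z \<in> {0..1}"
  shows "\<bar>f z\<bar> \<le> B"
proof -
  have "f z \<in> {-B..B}" using assms by (auto simp: lip1_class_def)
  thus ?thesis by (auto simp: abs_le_iff)
qed

lemma child_dist:
  fixes g :: real
  assumes m: "m \<ge> 1" and n: "1 \<le> n"
  shows "\<bar>(real n - 1/2) * g / 2 ^ m - (real ((n + 1) div 2) - 1/2) * g / 2 ^ (m - 1)\<bar> = \<bar>g\<bar> / 2 ^ (m + 1)"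
proof -
  obtain k where k: "m = Suc k" using m by (cases m) auto
  have e: "(2::real) ^ m = 2 * 2 ^ k" "(2::real) ^ (m+1) = 4 * 2 ^ k" "m - 1 = k" using k by auto
  consider (ev) q where "n = 2 * q" | (od) q where "n = 2 * q + 1" by (metis oddE evenE)
  thus ?thesis
  proof cases
    case ev
    hence "(n + 1) div 2 = q" by simp
    thus ?thesis unfolding e using ev by (simp add: field_simps abs_divide abs_mult)
  next
    case od
    hence "(n + 1) div 2 = q + 1" by simp
    thus ?thesis unfolding e using od by (simp add: field_simps abs_divide abs_mult)
  qed
qed

lemma comparator:
  fixes f :: "real \<Rightarrow> real" and B \<gamma> :: real and N J a M :: nat
  assumes g: "\<gamma> > 0" and Ng: "real N * \<gamma> = 1" and a: "1 \<le> a" "a \<le> N"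
    and J: "real J * \<gamma> = 2 * B" and B: "B > 0" and f: "f \<in> lip1_class B" and M: "M \<ge> 1"
  shows "\<exists>j us. j \<le> J \<and> simp2 (dc_blocks M) us \<and>
     (\<forall>z\<in>dc_I \<gamma> a. \<bar>dc_f B \<gamma> M a j us z - f z\<bar> \<le> \<gamma> / 2 ^ (M + 1) \<and> \<bar>dc_f B \<gamma> M a j us z\<bar> \<le> B)"
proof -
  define c where "c m n = (real a - 1) * \<gamma> + (real n - 1/2) * \<gamma> / 2 ^ m" for m n :: nat
  have c01: "c m n \<in> {0..1}" if "1 \<le> n" "n \<le> 2 ^ m" for m n
  proof -
    have n1: "real n \<le> 2 ^ m" using that(2) by (metis of_nat_le_iff of_nat_numeral of_nat_power)
    have "0 \<le> (real n - 1/2) * \<gamma> / 2 ^ m" using that g by simp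
    moreover have "(real n - 1/2) * \<gamma> / 2 ^ m \<le> \<gamma>"
    proof -
      have "real n - 1/2 \<le> 2^m" using n1 by linarith
      hence "(real n - 1/2) * \<gamma> \<le> 2^m * \<gamma>" using g by (intro mult_right_mono) auto
      thus ?thesis by (simp add: divide_le_eq mult.commute)
    qed
    moreover have "0 \<le> (real a - 1) * \<gamma>" using a g by simp
    moreover have "(real a - 1) * \<gamma> + \<gamma> \<le> 1"
    proof -
      have "real a * \<gamma> \<le> real N * \<gamma>" using a g by (intro mult_right_mono) auto
      thus ?thesis using Ng by (simp add: algebra_simps)
    qed
    ultimately show ?thesis unfolding c_def by auto
  qed
  define X where "X = (f (c 0 1) + B) / \<gamma>"
  have fc0: "\<bar>f (c 0 1)\<bar> \<le> B" using lipD2[OF f c01[of 1 0]] by simp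
  have X0: "0 \<le> X" "X \<le> real J" using fc0 g J unfolding X_def
    by (auto simp: divide_le_eq abs_le_iff)
  define j0 where "j0 = nat (round X)"
  have r0: "0 \<le> round X" using round_mono[OF X0(1)] by simp
  have rJ: "round X \<le> int J" using round_mono[OF X0(2)] by simp
  have j0J: "j0 \<le> J" using rJ r0 by (simp add: j0_def nat_le_iff)
  have j0r: "real j0 = real_of_int (round X)" using r0 by (simp add: j0_def)
  define base where "base = - B + real j0 * \<gamma>"
  have based: "\<bar>base - f (c 0 1)\<bar> \<le> \<gamma> / 2"
  proof -
    have "base - f (c 0 1) = \<gamma> * (real_of_int (round X) - X)" unfolding base_def j0r X_def using g
      by (simp add: field_simps)
    hence "\<bar>base - f (c 0 1)\<bar> = \<gamma> * \<bar>real_of_int (round X) - X\<bar>" using g by (simp add: abs_mult)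
    also have "\<dots> \<le> \<gamma> * (1/2)" using of_int_round_abs_le[of X] g by (intro mult_left_mono) auto
    finally show ?thesis by simp
  qed
  define V where "V m n = f (c m n)" for m n
  define \<delta> where "\<delta> m n = V m n - (if m = 1 then base else V (m - 1) ((n + 1) div 2))" for m n :: nat
  define r where "r m = \<gamma> / 2 ^ (m - 1)" for m :: nat
  have rpos: "r m > 0" for m using g by (simp add: r_def)
  have pidx: "1 \<le> (n + 1) div 2" "(n + 1) div 2 \<le> 2 ^ (m - 1)" if hh: "m \<ge> 1" "1 \<le> n" "n \<le> 2 ^ m" for m n :: nat
  proof -
    show "1 \<le> (n + 1) div 2" using hh by simp
    obtain k where k: "m = Suc k" using hh by (cases m) auto
    show "(n + 1) div 2 \<le> 2 ^ (m - 1)" using hh(3) k by simp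
  qed
  have cd: "\<bar>c m n - c (m - 1) ((n + 1) div 2)\<bar> = \<gamma> / 2 ^ (m + 1)" if "m \<ge> 1" "1 \<le> n" for m n :: nat
  proof -
    have "c m n - c (m - 1) ((n + 1) div 2) = (real n - 1/2) * \<gamma> / 2 ^ m - (real ((n + 1) div 2) - 1/2) * \<gamma> / 2 ^ (m - 1)"
      unfolding c_def by simp
    thus ?thesis using child_dist[OF that, of \<gamma>] g by simp
  qed
  have Vd: "\<bar>V m n - V (m - 1) ((n + 1) div 2)\<bar> \<le> \<gamma> / 2 ^ (m + 1)" if "m \<ge> 1" "1 \<le> n" "n \<le> 2 ^ m" for m n
    unfolding V_def using lipD1[OF f c01[OF that(2,3)] c01[OF pidx[OF that]]] cd[OF that(1,2)] by simp
  have \<delta>b: "\<bar>\<delta> m n\<bar> \<le> r m" if mn: "(m, n) \<in> dc_blocks M" for m n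
  proof -
    have m1: "m \<ge> 1" "1 \<le> n" "n \<le> 2 ^ m" using mn by (auto simp: dc_blocks_def)
    show ?thesis
    proof (cases "m = 1")
      case True
      have p1: "(n + 1) div 2 = 1" using m1 True by auto
      have "\<bar>\<delta> m n\<bar> \<le> \<bar>V m n - V 0 1\<bar> + \<bar>base - f (c 0 1)\<bar>"
        unfolding \<delta>_def V_def using True by simp
      also have "\<dots> \<le> \<gamma> / 4 + \<gamma> / 2" using Vd[OF m1] based True p1 by simp
      also have "\<dots> \<le> r m" using True g by (simp add: r_def)
      finally show ?thesis .
    next
      case False
      have "\<bar>\<delta> m n\<bar> \<le> \<gamma> / 2 ^ (m + 1)" unfolding \<delta>_def using False Vd[OF m1] by simp
      also have "\<dots> \<le> r m" unfolding r_def using g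
        by (intro divide_left_mono power_increasing) auto
      finally show ?thesis .
    qed
  qed
  define us where "us k i = (if i = 1 then (1 - \<delta> (fst k) (snd k) / r (fst k)) / 2 else (1 + \<delta> (fst k) (snd k) / r (fst k)) / 2)" for k :: "nat \<times> nat" and i :: nat
  have ussimp: "simp2 (dc_blocks M) us"
    unfolding simp2_def
  proof
    fix k assume k: "k \<in> dc_blocks M"
    obtain m n where kmn: "k = (m, n)" by force
    have "\<bar>\<delta> m n / r m\<bar> \<le> 1" using \<delta>b[of m n] k rpos[of m] kmn by (simp add: abs_divide divide_le_eq)
    then obtain q where q: "q = \<delta> m n / r m" "-1 \<le> q" "q \<le> 1" by (auto simp only: abs_le_iff)
    have "us k 1 = (1 - q) / 2" "us k 2 = (1 + q) / 2" by (simp_all add: us_def kmn q(1))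
    thus "0 \<le> us k 1 \<and> 0 \<le> us k 2 \<and> us k 1 + us k 2 = 1" using q by simp
  qed
  have Fus: "us (m, n) 1 * (- \<gamma> / 2 ^ (m - 1)) + us (m, n) 2 * (\<gamma> / 2 ^ (m - 1)) = \<delta> m n" for m n
  proof -
    have "us (m, n) 1 * (- \<gamma> / 2 ^ (m - 1)) + us (m, n) 2 * (\<gamma> / 2 ^ (m - 1)) = r m * (\<delta> m n / r m)"
      by (simp add: us_def r_def field_simps)
    thus ?thesis using rpos[of m] by simp
  qed
  have tele: "(\<Sum>m=1..K. \<delta> m (idx \<gamma> a m z)) = V K (idx \<gamma> a K z) - base" if z: "z \<in> dc_I \<gamma> a" and K: "K \<ge> 1" for z K
    using K
  proof (induction K)
    case 0 thus ?case by simp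
  next
    case (Suc K)
    show ?case
    proof (cases "K = 0")
      case True thus ?thesis by (simp add: \<delta>_def)
    next
      case False
      have nest: "idx \<gamma> a K z = (idx \<gamma> a (Suc K) z + 1) div 2" using idx_nest[OF g z, of "Suc K"] by simp
      have "(\<Sum>m=1..Suc K. \<delta> m (idx \<gamma> a m z)) = (\<Sum>m=1..K. \<delta> m (idx \<gamma> a m z)) + \<delta> (Suc K) (idx \<gamma> a (Suc K) z)"
        by simp
      also have "\<dots> = V (Suc K) (idx \<gamma> a (Suc K) z) - base"
        using Suc False nest by (simp add: \<delta>_def)
      finally show ?thesis .
    qed
  qed
  show ?thesis
  proof (intro exI conjI ballI)
    show "j0 \<le> J" by (rule j0J)
    show "simp2 (dc_blocks M) us" by (rule ussimp)
    fix z assume z: "z \<in> dc_I \<gamma> a"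
    have fe: "dc_f B \<gamma> M a j0 us z = V M (idx \<gamma> a M z)"
      unfolding dc_f_idx[OF g z] Fus tele[OF z M] base_def by simp
    define n where "n = idx \<gamma> a M z"
    have n: "1 \<le> n" "n \<le> 2 ^ M" using idx_range[OF g z] by (auto simp: n_def)
    have zs: "z \<in> dc_sub \<gamma> a M n" using sub_iff[OF g z n] by (simp add: n_def)
    have zb: "(real a - 1) * \<gamma> + (real n - 1) * \<gamma> / 2 ^ M \<le> z" "z \<le> (real a - 1) * \<gamma> + real n * \<gamma> / 2 ^ M"
      using zs by (auto simp: dc_sub_def Let_def split: if_splits)
    have "\<bar>c M n - z\<bar> \<le> \<gamma> / 2 ^ (M + 1)"
    proof -
      have e1: "c M n = (real a - 1) * \<gamma> + (real n - 1) * \<gamma> / 2 ^ M + \<gamma> / 2 ^ (M + 1)"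
        unfolding c_def by (simp add: field_simps)
      have e2: "(real a - 1) * \<gamma> + real n * \<gamma> / 2 ^ M = (real a - 1) * \<gamma> + (real n - 1) * \<gamma> / 2 ^ M + 2 * (\<gamma> / 2 ^ (M + 1))"
        by (simp add: field_simps)
      show ?thesis unfolding abs_le_iff using zb e1 e2 by linarith
    qed
    moreover have z01: "z \<in> {0..1}"
    proof -
      have "(real a - 1) * \<gamma> \<le> z" "z \<le> real a * \<gamma>" using dcI_bounds[OF z] by auto
      moreover have "0 \<le> (real a - 1) * \<gamma>" using a g by simp
      moreover have "real a * \<gamma> \<le> real N * \<gamma>" using a g by (intro mult_right_mono) auto
      ultimately show ?thesis using Ng by auto
    qed
    ultimately have "\<bar>V M n - f z\<bar> \<le> \<gamma> / 2 ^ (M + 1)"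
      using lipD1[OF f c01[OF n] z01] unfolding V_def by simp
    thus "\<bar>dc_f B \<gamma> M a j0 us z - f z\<bar> \<le> \<gamma> / 2 ^ (M + 1)" using fe n_def by simp
    show "\<bar>dc_f B \<gamma> M a j0 us z\<bar> \<le> B" using fe lipD2[OF f c01[OF n]] by (simp add: V_def n_def)
  qed
qed


lemma dc_u_simp2: "simp2 (dc_blocks M) (dc_u B \<gamma> M a j x y t)" if "B > 0" "\<gamma> > 0"
proof -
  have "simp2 (dc_blocks M) (ameg_weights (dc_blocks M) (\<lambda>_. 2) (\<lambda>(m, n). 16 * B * \<gamma> / 2 ^ m) S C)" for S C
    using that by (intro weights_simp2) auto
  thus ?thesis unfolding dc_u_def ameg_out_def by (simp split: prod.split)
qed

lemma blocks_G_sum: "(\<Sum>k\<in>dc_blocks M. 3 * (16 * B * \<gamma> / 2 ^ fst k) * w) = 48 * B * \<gamma> * real M * w"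
proof -
  have bl: "dc_blocks M = Sigma {1..M} (\<lambda>m. {1..(2::nat)^m})" by (auto simp: dc_blocks_def)
  have "(\<Sum>k\<in>dc_blocks M. 3 * (16 * B * \<gamma> / 2 ^ fst k) * w) = (\<Sum>(m,n)\<in>Sigma {1..M} (\<lambda>m. {1..(2::nat)^m}). 3 * (16 * B * \<gamma> / 2 ^ m) * w)"
    unfolding bl by (simp add: case_prod_beta)
  also have "\<dots> = (\<Sum>m=1..M. \<Sum>n\<in>{1..(2::nat)^m}. 3 * (16 * B * \<gamma> / 2 ^ m) * w)"
    by (subst sum.Sigma) auto
  also have "\<dots> = (\<Sum>m=1..M. 48 * B * \<gamma> * w)" by (rule sum.cong) (auto simp: field_simps)
  finally show ?thesis by simp
qed

lemma per_a:
  fixes B \<gamma> :: real and N J a M T :: nat and x y :: "nat \<Rightarrow> real" and f :: "real \<Rightarrow> real"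
  assumes g: "\<gamma> > 0" and Ng: "real N * \<gamma> = 1" and a: "1 \<le> a" "a \<le> N"
    and J: "real J * \<gamma> = 2 * B" and B: "B > 0" "\<gamma> \<le> B" and f: "f \<in> lip1_class B" and M: "M \<ge> 1"
    and xb: "\<And>t. t \<in> {1..T} \<Longrightarrow> x t \<in> {0..1}" and yb: "\<And>t. t \<in> {1..T} \<Longrightarrow> \<bar>y t\<bar> \<le> B"
  shows "(\<Sum>t\<in>{t. 1 \<le> t \<and> t \<le> T \<and> x t \<in> dc_I \<gamma> a}. (y t - dc_fa B \<gamma> M a x y t (x t))\<^sup>2)
       - (\<Sum>t\<in>{t. 1 \<le> t \<and> t \<le> T \<and> x t \<in> dc_I \<gamma> a}. (y t - f (x t))\<^sup>2)
       \<le> 32 * B\<^sup>2 * ln (real J + 1) + real (card {t. 1 \<le> t \<and> t \<le> T \<and> x t \<in> dc_I \<gamma> a}) * (2 * B * \<gamma> / 2 ^ M)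
         + 48 * B * \<gamma> * real M * (1 + sqrt (real (card {t. 1 \<le> t \<and> t \<le> T \<and> x t \<in> dc_I \<gamma> a})))"
proof -
  define Ra where "Ra = {t. 1 \<le> t \<and> t \<le> T \<and> x t \<in> dc_I \<gamma> a}"
  define na where "na = card Ra"
  obtain j us where j: "j \<le> J" and us: "simp2 (dc_blocks M) us"
    and usb: "\<And>z. z \<in> dc_I \<gamma> a \<Longrightarrow> \<bar>dc_f B \<gamma> M a j us z - f z\<bar> \<le> \<gamma> / 2 ^ (M + 1) \<and> \<bar>dc_f B \<gamma> M a j us z\<bar> \<le> B"
    using comparator[OF g Ng a J B(1) f M] by blast
  have dJ: "dc_J B \<gamma> = J"
  proof -
    have "2 * B / \<gamma> = real J" using J g by (simp add: field_simps)
    thus ?thesis by (simp add: dc_J_def)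
  qed
  define p where "p t j' = dc_fj B \<gamma> M a j' x y t (x t)" for t j'
  have pb: "\<bar>y t - p t j'\<bar> \<le> 4 * B" if "1 \<le> t" "t \<le> T" "x t \<in> dc_I \<gamma> a" "j' \<le> J" for t j'
  proof -
    have fb: "\<bar>dc_f B \<gamma> M a j' (dc_u B \<gamma> M a j' x y t) (x t) - (- B + real j' * \<gamma>)\<bar> \<le> 2 * \<gamma>"
      by (rule dc_f_bound[OF g that(3) dc_u_simp2[OF B(1) g]])
    have "real j' * \<gamma> \<le> real J * \<gamma>" using that(4) g by (intro mult_right_mono) auto
    hence jb: "0 \<le> real j' * \<gamma>" "real j' * \<gamma> \<le> 2 * B" using J g by auto
    have y1: "\<bar>y t\<bar> \<le> B" using yb that by simp
    show ?thesis unfolding abs_le_iff p_def dc_fj_def using abs_le_D1[OF fb] abs_le_D2[OF fb] abs_le_D1[OF y1] abs_le_D2[OF y1] jb B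
      by linarith
  qed
  have AG: "(\<Sum>t\<in>{t. 1 \<le> t \<and> t \<le> T \<and> x t \<in> dc_I \<gamma> a}. (y t - (\<Sum>j'=0..J. (exp (- (1/(2*(4*B)\<^sup>2)) * (\<Sum>s\<in>{s. 1 \<le> s \<and> s < t \<and> x s \<in> dc_I \<gamma> a}. (y s - p s j')\<^sup>2)) /
       (\<Sum>j''=0..J. exp (- (1/(2*(4*B)\<^sup>2)) * (\<Sum>s\<in>{s. 1 \<le> s \<and> s < t \<and> x s \<in> dc_I \<gamma> a}. (y s - p s j'')\<^sup>2)))) * p t j'))\<^sup>2)
     \<le> (\<Sum>s\<in>{s. 1 \<le> s \<and> s < T + 1 \<and> x s \<in> dc_I \<gamma> a}. (y s - p s j)\<^sup>2) + 2*(4*B)\<^sup>2 * ln (real J + 1)"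
    using agg_regret[where r="4*B" and P="\<lambda>s. x s \<in> dc_I \<gamma> a" and y=y and p=p and J=J and T=T, OF _ j] B(1) pb
    by simp
  have fa_eq: "dc_fa B \<gamma> M a x y t (x t) = (\<Sum>j'=0..J. (exp (- (1/(2*(4*B)\<^sup>2)) * (\<Sum>s\<in>{s. 1 \<le> s \<and> s < t \<and> x s \<in> dc_I \<gamma> a}. (y s - p s j')\<^sup>2)) /
       (\<Sum>j''=0..J. exp (- (1/(2*(4*B)\<^sup>2)) * (\<Sum>s\<in>{s. 1 \<le> s \<and> s < t \<and> x s \<in> dc_I \<gamma> a}. (y s - p s j'')\<^sup>2)))) * p t j')" for t
  proof -
    have e: "1/(2*(4*B)\<^sup>2) = 1 / (32 * B\<^sup>2)" by (simp add: power2_eq_square)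
    show ?thesis unfolding dc_fa_def dc_w_def dc_cumloss_def dJ e p_def Let_def by simp
  qed
  have A1: "(\<Sum>t\<in>Ra. (y t - dc_fa B \<gamma> M a x y t (x t))\<^sup>2)
      \<le> (\<Sum>t\<in>Ra. dc_loss B \<gamma> M a j x y t (dc_u B \<gamma> M a j x y t)) + 32 * B\<^sup>2 * ln (real J + 1)"
  proof -
    have e1: "{s. 1 \<le> s \<and> s < T + 1 \<and> x s \<in> dc_I \<gamma> a} = Ra" by (auto simp: Ra_def)
    have e2: "(y s - p s j)\<^sup>2 = dc_loss B \<gamma> M a j x y s (dc_u B \<gamma> M a j x y s)" for s
      by (simp add: p_def dc_fj_def dc_loss_def)
    have e3: "2*(4*B)\<^sup>2 = 32 * B\<^sup>2" by (simp add: power2_eq_square)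
    have L: "(\<Sum>t\<in>Ra. (y t - dc_fa B \<gamma> M a x y t (x t))\<^sup>2) = (\<Sum>t\<in>{t. 1 \<le> t \<and> t \<le> T \<and> x t \<in> dc_I \<gamma> a}. (y t - (\<Sum>j'=0..J. (exp (- (1/(2*(4*B)\<^sup>2)) * (\<Sum>s\<in>{s. 1 \<le> s \<and> s < t \<and> x s \<in> dc_I \<gamma> a}. (y s - p s j')\<^sup>2)) /
       (\<Sum>j''=0..J. exp (- (1/(2*(4*B)\<^sup>2)) * (\<Sum>s\<in>{s. 1 \<le> s \<and> s < t \<and> x s \<in> dc_I \<gamma> a}. (y s - p s j'')\<^sup>2)))) * p t j'))\<^sup>2)"
      unfolding Ra_def by (simp only: fa_eq)
    have R: "(\<Sum>s\<in>{s. 1 \<le> s \<and> s < T + 1 \<and> x s \<in> dc_I \<gamma> a}. (y s - p s j)\<^sup>2) + 2*(4*B)\<^sup>2 * ln (real J + 1)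
       = (\<Sum>t\<in>Ra. dc_loss B \<gamma> M a j x y t (dc_u B \<gamma> M a j x y t)) + 32 * B\<^sup>2 * ln (real J + 1)"
      by (simp only: e1 e2 e3)
    show ?thesis using AG unfolding L R .
  qed
  have A2: "(\<Sum>t\<in>Ra. dc_loss B \<gamma> M a j x y t (dc_u B \<gamma> M a j x y t) - dc_loss B \<gamma> M a j x y t us)
      \<le> 48 * B * \<gamma> * real M * sqrt (1 + real na)"
  proof -
    have I: "(\<Sum>t\<in>Ra. dc_loss B \<gamma> M a j x y t (dc_u B \<gamma> M a j x y t) - dc_loss B \<gamma> M a j x y t us)
      \<le> (\<Sum>k\<in>dc_blocks M. 3 * (16 * B * \<gamma> / 2 ^ fst k) * sqrt (1 + real na))"
      unfolding Ra_def na_def by (rule inst_regret[OF g B J j _ us]) (use yb in auto)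
    show ?thesis using I unfolding blocks_G_sum .
  qed
  have A3: "dc_loss B \<gamma> M a j x y t us \<le> (y t - f (x t))\<^sup>2 + 2 * B * \<gamma> / 2 ^ M" if t: "t \<in> Ra" for t
  proof -
    have tI: "x t \<in> dc_I \<gamma> a" "t \<in> {1..T}" using t by (auto simp: Ra_def)
    define P where "P = dc_f B \<gamma> M a j us (x t)"
    define Q where "Q = f (x t)"
    have PQ: "\<bar>P - Q\<bar> \<le> \<gamma> / 2 ^ (M + 1)" "\<bar>P\<bar> \<le> B" using usb[OF tI(1)] by (auto simp: P_def Q_def)
    have Qb: "\<bar>Q\<bar> \<le> B" unfolding Q_def by (rule lipD2[OF f xb[OF tI(2)]])
    have y1: "\<bar>y t\<bar> \<le> B" using yb tI by simp
    have "(y t - P)\<^sup>2 - (y t - Q)\<^sup>2 = (Q - P) * (2 * y t - P - Q)" by (simp add: power2_eq_square algebra_simps)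
    also have "\<dots> \<le> \<bar>Q - P\<bar> * \<bar>2 * y t - P - Q\<bar>" by (simp add: abs_mult[symmetric])
    also have "\<dots> \<le> (\<gamma> / 2 ^ (M + 1)) * (4 * B)"
    proof (rule mult_mono)
      show "\<bar>Q - P\<bar> \<le> \<gamma> / 2 ^ (M + 1)" using PQ by (simp add: abs_minus_commute)
      show "\<bar>2 * y t - P - Q\<bar> \<le> 4 * B" unfolding abs_le_iff
        using abs_le_D1[OF PQ(2)] abs_le_D2[OF PQ(2)] abs_le_D1[OF Qb] abs_le_D2[OF Qb] abs_le_D1[OF y1] abs_le_D2[OF y1] by linarith
    qed (use g in auto)
    also have "\<dots> = 2 * B * \<gamma> / 2 ^ M" by (simp add: field_simps)
    finally show ?thesis by (simp add: dc_loss_def P_def Q_def)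
  qed
  have finRa: "finite Ra" by (rule finite_subset[of _ "{..T}"]) (auto simp: Ra_def)
  have A3s: "(\<Sum>t\<in>Ra. dc_loss B \<gamma> M a j x y t us) \<le> (\<Sum>t\<in>Ra. (y t - f (x t))\<^sup>2) + real na * (2 * B * \<gamma> / 2 ^ M)"
  proof -
    have "(\<Sum>t\<in>Ra. dc_loss B \<gamma> M a j x y t us) \<le> (\<Sum>t\<in>Ra. (y t - f (x t))\<^sup>2 + 2 * B * \<gamma> / 2 ^ M)"
      by (rule sum_mono) (rule A3)
    thus ?thesis by (simp add: sum.distrib na_def)
  qed
  have sq: "sqrt (1 + real na) \<le> 1 + sqrt (real na)"
  proof -
    have "1 + real na \<le> (1 + sqrt (real na))\<^sup>2" by (simp add: power2_eq_square algebra_simps)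
    hence "sqrt (1 + real na) \<le> sqrt ((1 + sqrt (real na))\<^sup>2)" by (rule real_sqrt_le_mono)
    thus ?thesis by simp
  qed
  have "48 * B * \<gamma> * real M * sqrt (1 + real na) \<le> 48 * B * \<gamma> * real M * (1 + sqrt (real na))"
    using sq B g by (intro mult_left_mono) auto
  hence "(\<Sum>t\<in>Ra. (y t - dc_fa B \<gamma> M a x y t (x t))\<^sup>2) - (\<Sum>t\<in>Ra. (y t - f (x t))\<^sup>2)
     \<le> 32 * B\<^sup>2 * ln (real J + 1) + real na * (2 * B * \<gamma> / 2 ^ M) + 48 * B * \<gamma> * real M * (1 + sqrt (real na))"
    using A1 A2 A3s by (simp add: sum_subtractf)
  thus ?thesis unfolding Ra_def na_def .
qed


lemma s_facts:
  fixes T :: nat assumes T: "T \<ge> 2"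
  shows "real T powr (1/3) > 1" "(real T powr (1/3)) ^ 3 = real T" "real T powr (1/3) \<le> real T"
    "real T powr (-1/3) = 1 / real T powr (1/3)"
proof -
  have T1: "real T > 1" using T by simp
  have "(1::real) powr (1/3) < real T powr (1/3)" by (rule powr_less_mono2) (use T1 in auto)
  thus "real T powr (1/3) > 1" by simp
  have "(real T powr (1/3)) ^ 3 = real T powr (real 3 * (1/3))"
    by (rule powr_power) (use T1 in auto)
  also have "real 3 * (1/3) = (1::real)" by simp
  also have "real T powr 1 = real T" using T1 by (intro powr_one) auto
  finally show "(real T powr (1/3)) ^ 3 = real T" .
  have "real T powr (1/3) \<le> real T powr 1" by (rule powr_mono) (use T1 in auto)
  thus "real T powr (1/3) \<le> real T" using T1 by (simp only: powr_one[of "real T"])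
  show "real T powr (-1/3) = 1 / real T powr (1/3)"
  proof -
    have "real T powr (-1/3) = real T powr (-(1/3))" by simp
    also have "\<dots> = inverse (real T powr (1/3))" by (rule powr_minus)
    finally show ?thesis by (simp only: inverse_eq_divide)
  qed
qed

lemma ln2_ge_half: "ln (2::real) \<ge> 1/2"
proof -
  have "exp (1/2::real) \<le> 1 + 1/2 + (1/2)\<^sup>2" by (rule exp_bound) auto
  hence "exp (1/2::real) \<le> 2" by (simp add: power2_eq_square)
  hence "ln (exp (1/2::real)) \<le> ln 2" by (subst ln_le_cancel_iff) auto
  thus ?thesis by simp
qed

lemma Ia_unique:
  assumes g: "\<gamma> > 0" and N: "real N * \<gamma> = 1" and a: "1 \<le> a" "a \<le> N" and a': "1 \<le> a'" "a' \<le> N"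
    and z: "z \<in> dc_I \<gamma> a" "z \<in> dc_I \<gamma> a'"
  shows "a = a'"
proof (rule ccontr)
  assume ne: "a \<noteq> a'"
  have gen: False if lt: "b < b'" "b' \<le> N" "z \<in> dc_I \<gamma> b" "z \<in> dc_I \<gamma> b'" for b b'
  proof -
    have "real b * \<gamma> < real N * \<gamma>" using lt g by (intro mult_strict_right_mono) auto
    hence ne1: "real b * \<gamma> \<noteq> 1" using N by linarith
    have Ib: "dc_I \<gamma> b = {(real b - 1) * \<gamma> ..< real b * \<gamma>}" using ne1 by (simp add: dc_I_def)
    have A: "z < real b * \<gamma>" using lt(3) unfolding Ib by simp
    have Bq: "(real b' - 1) * \<gamma> \<le> z" using dcI_bounds(1)[OF lt(4)] .
    have "real b \<le> real b' - 1" using lt(1) by linarith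
    hence C: "real b * \<gamma> \<le> (real b' - 1) * \<gamma>" using g by (intro mult_right_mono) auto
    show False using A Bq C by linarith
  qed
  show False
  proof (cases "a < a'")
    case True thus ?thesis using gen[OF True a'(2) z] by simp
  next
    case False hence "a' < a" using ne by simp
    thus ?thesis using gen[OF _ a(2) z(2) z(1)] by simp
  qed
qed

lemma Ia_cover:
  assumes g: "\<gamma> > 0" and N: "real N * \<gamma> = 1" and z: "z \<in> {0..1}"
  shows "\<exists>a\<in>{1..N}. z \<in> dc_I \<gamma> a"
proof -
  have Npos: "real N > 0" using N g by (cases N) auto
  have N1: "N \<ge> 1" using Npos by simp
  have Ng: "\<gamma> = 1 / real N" using N Npos by (simp add: eq_divide_eq mult.commute)
  show ?thesis
  proof (cases "z = 1")
    case True
    have IN: "dc_I \<gamma> N = {(real N - 1) * \<gamma> .. real N * \<gamma>}" using N by (simp add: dc_I_def)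
    have "(real N - 1) * \<gamma> \<le> 1" using N g by (simp add: algebra_simps)
    hence "z \<in> dc_I \<gamma> N" unfolding IN using True N by simp
    thus ?thesis using N1 by auto
  next
    case False
    hence z1: "z < 1" using z by simp
    define k where "k = \<lfloor>z * real N\<rfloor>"
    have k0: "0 \<le> k" using z Npos by (simp add: k_def)
    have kl1: "real_of_int k \<le> z * real N" unfolding k_def by (rule of_int_floor_le)
    have kl2: "z * real N < real_of_int k + 1" unfolding k_def by (rule real_of_int_floor_add_one_gt)
    have "z * real N < 1 * real N" by (rule mult_strict_right_mono[OF z1 Npos])
    hence kN: "k < int N" using kl1 by linarith
    define a where "a = nat k + 1"
    have ar: "real a = real_of_int k + 1" using k0 by (simp add: a_def)
    have lo: "(real a - 1) * \<gamma> \<le> z"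
    proof -
      have "real_of_int k / real N \<le> z" using kl1 Npos by (simp add: pos_divide_le_eq)
      thus ?thesis unfolding ar Ng by simp
    qed
    have hi: "z < real a * \<gamma>"
    proof -
      have "z < (real_of_int k + 1) / real N" using kl2 Npos by (simp add: pos_less_divide_eq)
      thus ?thesis unfolding ar Ng by simp
    qed
    have "z \<in> dc_I \<gamma> a" using lo hi by (auto simp: dc_I_def)
    moreover have "a \<in> {1..N}" using kN k0 by (auto simp: a_def)
    ultimately show ?thesis by blast
  qed
qed

lemma onehot_ex:
  assumes g: "\<gamma> > 0" and N: "real N * \<gamma> = 1" and z: "z \<in> {0..1}"
  obtains a0 where "a0 \<in> {1..N}" "z \<in> dc_I \<gamma> a0"
    "\<And>v :: nat \<Rightarrow> real. (\<Sum>a=1..N. if z \<in> dc_I \<gamma> a then v a else 0) = v a0"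
proof -
  obtain a0 where a0: "a0 \<in> {1..N}" "z \<in> dc_I \<gamma> a0" using Ia_cover[OF g N z] by blast
  have eq: "(\<Sum>a=1..N. if z \<in> dc_I \<gamma> a then v a else 0) = v a0" for v :: "nat \<Rightarrow> real"
  proof -
    have "(if z \<in> dc_I \<gamma> a then v a else 0) = (if a = a0 then v a else 0)" if a: "a \<in> {1..N}" for a
    proof (cases "z \<in> dc_I \<gamma> a")
      case True
      have "a = a0"
      proof (rule Ia_unique[OF g N])
        show "1 \<le> a" "a \<le> N" using a by auto
        show "1 \<le> a0" "a0 \<le> N" using a0(1) by auto
        show "z \<in> dc_I \<gamma> a" by (rule True)
        show "z \<in> dc_I \<gamma> a0" by (rule a0(2))
      qed
      thus ?thesis using True by simp
    next
      case False
      hence "a \<noteq> a0" using a0(2) by blast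
      thus ?thesis using False by simp
    qed
    hence "(\<Sum>a=1..N. if z \<in> dc_I \<gamma> a then v a else 0) = (\<Sum>a=1..N. if a = a0 then v a else 0)"
      by (rule sum.cong[OF refl])
    also have "\<dots> = v a0" using a0(1) by (simp add: sum.delta)
    finally show ?thesis .
  qed
  show ?thesis by (rule that[OF a0 eq])
qed

lemma regroup:
  fixes h :: "nat \<Rightarrow> nat \<Rightarrow> real"
  shows "(\<Sum>t=1..T. \<Sum>a=1..N. if x t \<in> dc_I \<gamma> a then h a t else 0)
       = (\<Sum>a=1..N. \<Sum>t\<in>{t. 1 \<le> t \<and> t \<le> T \<and> x t \<in> dc_I \<gamma> a}. h a t)"
proof -
  have "(\<Sum>t=1..T. \<Sum>a=1..N. if x t \<in> dc_I \<gamma> a then h a t else 0) = (\<Sum>a=1..N. \<Sum>t=1..T. if x t \<in> dc_I \<gamma> a then h a t else 0)"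
    by (rule sum.swap)
  also have "\<dots> = (\<Sum>a=1..N. \<Sum>t\<in>{t\<in>{1..T}. x t \<in> dc_I \<gamma> a}. h a t)"
  proof (rule sum.cong[OF refl])
    fix a
    show "(\<Sum>t=1..T. if x t \<in> dc_I \<gamma> a then h a t else 0) = (\<Sum>t\<in>{t\<in>{1..T}. x t \<in> dc_I \<gamma> a}. h a t)"
      by (rule sum.inter_filter[symmetric]) simp
  qed
  also have "\<dots> = (\<Sum>a=1..N. \<Sum>t\<in>{t. 1 \<le> t \<and> t \<le> T \<and> x t \<in> dc_I \<gamma> a}. h a t)"
  proof -
    have "{t\<in>{1..T}. x t \<in> dc_I \<gamma> a} = {t. 1 \<le> t \<and> t \<le> T \<and> x t \<in> dc_I \<gamma> a}" for a by auto
    thus ?thesis by simp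
  qed
  finally show ?thesis .
qed

lemma sqrt_amgm:
  fixes n l :: real assumes "n \<ge> 0" "l > 0"
  shows "sqrt n \<le> (n / l + l) / 2"
proof -
  have "0 \<le> (sqrt n - l)\<^sup>2" by simp
  hence "2 * l * sqrt n \<le> n + l\<^sup>2" using assms by (simp add: power2_eq_square algebra_simps)
  hence "sqrt n \<le> (n + l\<^sup>2) / (2 * l)" using assms by (simp add: pos_le_divide_eq mult.commute mult.left_commute)
  also have "\<dots> = (n / l + l) / 2" using assms by (simp add: field_simps power2_eq_square)
  finally show ?thesis .
qed

lemma final_numeric:
  fixes B s L lJ \<gamma> :: real and N M T :: nat
  assumes B: "B > 0"
  assumes s: "s \<ge> 1"
  assumes L: "L \<ge> 1/2"
  assumes lJ: "lJ \<le> 3 * L"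
  assumes hML: "real M \<le> 4 * L"
  assumes N: "real N = s / B"
  assumes g: "\<gamma> = B / s"
  assumes T: "real T = s ^ 3"
  assumes M2: "(2::real) ^ M \<ge> s\<^sup>2"
  shows "real N * (32 * B\<^sup>2 * lJ) + (2 * B * \<gamma> / 2 ^ M) * real T + 48 * B * \<gamma> * real M * real N
         + 48 * B * \<gamma> * real M * ((real T / (s * B) + real N * (s * B)) / 2)
       \<le> 500 * max B (B\<^sup>2) * s * L"
proof -
  define mx where "mx = max B (B\<^sup>2)"
  have mxB: "B \<le> mx" "B\<^sup>2 \<le> mx" by (auto simp: mx_def)
  have spos: "s > 0" using s by simp
  have sL: "s * L \<ge> 1/2"
  proof -
    have "1 * (1/2) \<le> s * L" using s L by (intro mult_mono) auto
    thus ?thesis by simp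
  qed
  have Lpos: "L > 0" using L by simp
  have t1: "real N * (32 * B\<^sup>2 * lJ) \<le> 96 * B * s * L"
  proof -
    have "real N * (32 * B\<^sup>2 * lJ) = 32 * B * s * lJ" using B spos unfolding N by (simp add: field_simps power2_eq_square)
    also have "\<dots> \<le> 32 * B * s * (3 * L)" using lJ B spos by (intro mult_left_mono) auto
    finally show ?thesis by simp
  qed
  have t2: "(2 * B * \<gamma> / 2 ^ M) * real T \<le> 4 * B\<^sup>2 * s * L"
  proof -
    have p: "(2::real) ^ M > 0" by simp
    have "(2 * B * \<gamma> / 2 ^ M) * real T = 2 * B\<^sup>2 * (s\<^sup>2 / 2 ^ M)" unfolding g T using spos
      by (simp add: field_simps power2_eq_square power3_eq_cube)
    also have "\<dots> \<le> 2 * B\<^sup>2 * 1" using M2 p by (intro mult_left_mono) (auto simp: divide_le_eq)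
    also have "\<dots> \<le> 2 * B\<^sup>2 * (2 * (s * L))" using sL by (intro mult_left_mono) auto
    finally show ?thesis by (simp add: algebra_simps)
  qed
  have t3: "48 * B * \<gamma> * real M * real N \<le> 192 * B * s * L"
  proof -
    have "48 * B * \<gamma> * real M * real N = 48 * B * real M" unfolding g N using B spos by (simp add: field_simps)
    also have "\<dots> \<le> 48 * B * (4 * L)" using hML B by (intro mult_left_mono) auto
    also have "\<dots> \<le> 48 * B * (4 * (s * L))" using s Lpos B by (intro mult_left_mono) auto
    finally show ?thesis by simp
  qed
  have t4: "48 * B * \<gamma> * real M * ((real T / (s * B) + real N * (s * B)) / 2) \<le> 96 * (B + B\<^sup>2) * s * L"
  proof -
    have "48 * B * \<gamma> * real M * ((real T / (s * B) + real N * (s * B)) / 2) = 24 * real M * s * (B + B\<^sup>2)"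
      unfolding g N T using B spos by (simp add: field_simps power2_eq_square power3_eq_cube)
    also have "\<dots> \<le> 24 * (4 * L) * s * (B + B\<^sup>2)" using hML B spos
      by (intro mult_right_mono) (auto intro: add_nonneg_nonneg)
    finally show ?thesis by (simp add: algebra_simps)
  qed
  have "96 * B * s * L + 4 * B\<^sup>2 * s * L + 192 * B * s * L + 96 * (B + B\<^sup>2) * s * L = (384 * B + 100 * B\<^sup>2) * (s * L)"
    by (simp add: algebra_simps)
  also have "\<dots> \<le> (384 * mx + 100 * mx) * (s * L)" using mxB spos Lpos by (intro mult_right_mono) auto
  also have "\<dots> \<le> 500 * mx * s * L" using mxB B spos Lpos by (simp add: algebra_simps)
  finally show ?thesis using t1 t2 t3 t4 unfolding mx_def by linarith
qed

lemma final_bound: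
  fixes B \<gamma> :: real and T M :: nat and x y :: "nat \<Rightarrow> real" and f :: "real \<Rightarrow> real"
  assumes B: "0 < B" and T: "2 \<le> T" and xb: "\<forall>t\<in>{1..T}. x t \<in> {0..1}" and yb: "\<forall>t\<in>{1..T}. \<bar>y t\<bar> \<le> B"
    and gi1: "1 / \<gamma> \<in> \<int>" and gi2: "2 * B / \<gamma> \<in> \<int>"
    and gdef: "\<gamma> = B * real T powr (-1/3)" and Mdef: "M = nat \<lceil>log 2 (\<gamma> * real T / B)\<rceil>"
    and f: "f \<in> lip1_class B"
  shows "(\<Sum>t=1..T. (y t - dc_pred B \<gamma> M x y t)\<^sup>2) - (\<Sum>t=1..T. (y t - f (x t))\<^sup>2)
         \<le> 500 * max B (B\<^sup>2) * real T powr (1/3) * ln (real T)"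
proof -
  define s where "s = real T powr (1/3)"
  have s1: "s > 1" and s3: "s ^ 3 = real T" and sT: "s \<le> real T" and sm: "real T powr (-1/3) = 1 / s"
    using s_facts[OF T] by (simp_all add: s_def)
  have spos: "s > 0" using s1 by simp
  have g: "\<gamma> = B / s" using gdef sm by simp
  have gpos: "\<gamma> > 0" using g B spos by simp
  have gB: "\<gamma> \<le> B" using g B s1 by (simp add: divide_le_eq)
  obtain k where k: "1 / \<gamma> = of_int k" using gi1 Ints_cases by blast
  have kpos: "k > 0" using k gpos by (metis of_int_0_less_iff zero_less_divide_1_iff)
  define N where "N = nat k"
  have Nr: "real N = 1 / \<gamma>" using k kpos by (simp add: N_def)
  have Ng: "real N * \<gamma> = 1" using Nr gpos by simp
  have Ns: "real N = s / B" using Nr g by simp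
  obtain l where l: "2 * B / \<gamma> = of_int l" using gi2 Ints_cases by blast
  have lpos: "l > 0" using l gpos B by (metis divide_pos_pos mult_pos_pos of_int_0_less_iff zero_less_numeral)
  define J where "J = nat l"
  have Jr: "real J = 2 * B / \<gamma>" using l lpos by (simp add: J_def)
  have Jg: "real J * \<gamma> = 2 * B" using Jr gpos by simp
  have Js: "real J = 2 * s" using Jr g B spos by simp
  have dA: "dc_A \<gamma> = N" using k kpos by (simp add: dc_A_def N_def)
  have gTB: "\<gamma> * real T / B = s\<^sup>2" using g B spos s3[symmetric] by (simp add: power2_eq_square power3_eq_cube field_simps)
  have s2: "s\<^sup>2 > 1" using s1 by (simp add: one_less_power)
  have lg: "log 2 (s\<^sup>2) > 0" using s2 by (simp add: log_def ln_gt_zero divide_pos_pos)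
  have MM: "M = nat \<lceil>log 2 (s\<^sup>2)\<rceil>" using Mdef gTB by simp
  have Mge: "real M \<ge> log 2 (s\<^sup>2)" unfolding MM using lg by linarith
  have Mle: "real M \<le> log 2 (s\<^sup>2) + 1" unfolding MM using lg by linarith
  have M1: "M \<ge> 1" unfolding MM using lg by linarith
  have M2: "(2::real) ^ M \<ge> s\<^sup>2"
  proof -
    have "(2::real) powr (log 2 (s\<^sup>2)) \<le> 2 powr (real M)" using Mge by (intro powr_mono) auto
    moreover have "(2::real) powr (log 2 (s\<^sup>2)) = s\<^sup>2" by (rule powr_log_cancel) (use s2 in auto)
    moreover have "(2::real) powr (real M) = 2 ^ M" by (simp add: powr_realpow)
    ultimately show ?thesis by simp
  qed
  define L where "L = ln (real T)"
  have l2: "ln (2::real) \<ge> 1/2" by (rule ln2_ge_half)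
  have LT: "L \<ge> ln 2" unfolding L_def using T by simp
  have L: "L \<ge> 1/2" using LT l2 by simp
  have lnT: "L = 3 * ln s" unfolding L_def s3[symmetric] using spos by (simp add: ln_realpow)
  have ML4: "real M \<le> 4 * L"
  proof -
    have "log 2 (s\<^sup>2) = 2 * ln s / ln 2" using spos by (simp add: log_def ln_realpow)
    also have "\<dots> \<le> 2 * ln s / (1/2)" using l2 s1 by (intro divide_left_mono) auto
    also have "\<dots> = (4/3) * L" unfolding lnT by simp
    finally have "log 2 (s\<^sup>2) \<le> (4/3) * L" .
    moreover have "1 \<le> 2 * L" using L by simp
    ultimately show ?thesis using Mle by linarith
  qed
  have lJ: "ln (real J + 1) \<le> 3 * L"
  proof -
    have "real J + 1 \<le> real T ^ 3"
    proof -
      have "real J + 1 \<le> 3 * real T" using Js sT s1 by simp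
      also have "\<dots> \<le> real T * real T * real T"
      proof -
        have T2: "2 \<le> real T" using T by simp
        have "2 * 2 \<le> real T * real T" by (rule mult_mono[OF T2 T2]) auto
        hence "3 \<le> real T * real T" by simp
        thus ?thesis using T by (simp add: mult.commute mult_right_mono)
      qed
      finally show ?thesis by (simp add: power3_eq_cube)
    qed
    hence "ln (real J + 1) \<le> ln (real T ^ 3)" using T by (subst ln_le_cancel_iff) auto
    thus ?thesis unfolding L_def using T by (simp add: ln_realpow)
  qed
  define Ra where "Ra a = {t. 1 \<le> t \<and> t \<le> T \<and> x t \<in> dc_I \<gamma> a}" for a
  define na where "na a = card (Ra a)" for a
  have xb': "\<And>t. t \<in> {1..T} \<Longrightarrow> x t \<in> {0..1}" using xb by blast
  have yb': "\<And>t. t \<in> {1..T} \<Longrightarrow> \<bar>y t\<bar> \<le> B" using yb by blast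
  have pt: "(y t - dc_pred B \<gamma> M x y t)\<^sup>2 - (y t - f (x t))\<^sup>2
      = (\<Sum>a=1..N. if x t \<in> dc_I \<gamma> a then (y t - dc_fa B \<gamma> M a x y t (x t))\<^sup>2 - (y t - f (x t))\<^sup>2 else 0)"
    if t: "t \<in> {1..T}" for t
  proof -
    obtain a0 where a0: "a0 \<in> {1..N}" "x t \<in> dc_I \<gamma> a0"
      and oh: "\<And>v :: nat \<Rightarrow> real. (\<Sum>a=1..N. if x t \<in> dc_I \<gamma> a then v a else 0) = v a0"
      using onehot_ex[OF gpos Ng xb'[OF t]] by blast
    have "dc_pred B \<gamma> M x y t = (\<Sum>a=1..N. if x t \<in> dc_I \<gamma> a then dc_fa B \<gamma> M a x y t (x t) else 0)"
      unfolding dc_pred_def dA by (rule sum.cong) (auto simp: indicator_def)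
    also have "\<dots> = dc_fa B \<gamma> M a0 x y t (x t)" by (rule oh)
    finally have "dc_pred B \<gamma> M x y t = dc_fa B \<gamma> M a0 x y t (x t)" .
    thus ?thesis using oh[of "\<lambda>a. (y t - dc_fa B \<gamma> M a x y t (x t))\<^sup>2 - (y t - f (x t))\<^sup>2"] by simp
  qed
  have cnt: "1 = (\<Sum>a=1..N. if x t \<in> dc_I \<gamma> a then (1::real) else 0)" if t: "t \<in> {1..T}" for t
  proof -
    obtain a0 where oh: "\<And>v :: nat \<Rightarrow> real. (\<Sum>a=1..N. if x t \<in> dc_I \<gamma> a then v a else 0) = v a0"
      using onehot_ex[OF gpos Ng xb'[OF t]] by blast
    show ?thesis using oh[of "\<lambda>_. 1"] by simp
  qed
  have sumna: "(\<Sum>a=1..N. real (na a)) = real T"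
  proof -
    have "real T = (\<Sum>t=1..T. (1::real))" by simp
    also have "\<dots> = (\<Sum>t=1..T. \<Sum>a=1..N. if x t \<in> dc_I \<gamma> a then (1::real) else 0)"
      by (rule sum.cong[OF refl]) (rule cnt)
    also have "\<dots> = (\<Sum>a=1..N. \<Sum>t\<in>Ra a. (1::real))" unfolding Ra_def by (rule regroup)
    also have "\<dots> = (\<Sum>a=1..N. real (na a))" by (simp add: na_def)
    finally show ?thesis by simp
  qed
  have "(\<Sum>t=1..T. (y t - dc_pred B \<gamma> M x y t)\<^sup>2) - (\<Sum>t=1..T. (y t - f (x t))\<^sup>2)
      = (\<Sum>t=1..T. (y t - dc_pred B \<gamma> M x y t)\<^sup>2 - (y t - f (x t))\<^sup>2)" by (simp add: sum_subtractf)
  also have "\<dots> = (\<Sum>t=1..T. \<Sum>a=1..N. if x t \<in> dc_I \<gamma> a then (y t - dc_fa B \<gamma> M a x y t (x t))\<^sup>2 - (y t - f (x t))\<^sup>2 else 0)"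
    by (rule sum.cong[OF refl]) (rule pt)
  also have "\<dots> = (\<Sum>a=1..N. \<Sum>t\<in>Ra a. (y t - dc_fa B \<gamma> M a x y t (x t))\<^sup>2 - (y t - f (x t))\<^sup>2)"
    unfolding Ra_def by (rule regroup)
  also have "\<dots> \<le> (\<Sum>a=1..N. 32 * B\<^sup>2 * ln (real J + 1) + real (na a) * (2 * B * \<gamma> / 2 ^ M) + 48 * B * \<gamma> * real M * (1 + sqrt (real (na a))))"
  proof (rule sum_mono)
    fix a assume a: "a \<in> {1..N}"
    have "(\<Sum>t\<in>Ra a. (y t - dc_fa B \<gamma> M a x y t (x t))\<^sup>2 - (y t - f (x t))\<^sup>2)
      = (\<Sum>t\<in>Ra a. (y t - dc_fa B \<gamma> M a x y t (x t))\<^sup>2) - (\<Sum>t\<in>Ra a. (y t - f (x t))\<^sup>2)" by (simp add: sum_subtractf)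
    also have "\<dots> \<le> 32 * B\<^sup>2 * ln (real J + 1) + real (na a) * (2 * B * \<gamma> / 2 ^ M) + 48 * B * \<gamma> * real M * (1 + sqrt (real (na a)))"
      unfolding Ra_def na_def using per_a[OF gpos Ng _ _ Jg B gB f M1 xb' yb', of a] a by auto
    finally show "(\<Sum>t\<in>Ra a. (y t - dc_fa B \<gamma> M a x y t (x t))\<^sup>2 - (y t - f (x t))\<^sup>2)
      \<le> 32 * B\<^sup>2 * ln (real J + 1) + real (na a) * (2 * B * \<gamma> / 2 ^ M) + 48 * B * \<gamma> * real M * (1 + sqrt (real (na a)))" .
  qed
  also have "\<dots> = real N * (32 * B\<^sup>2 * ln (real J + 1)) + (2 * B * \<gamma> / 2 ^ M) * (\<Sum>a=1..N. real (na a))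
      + 48 * B * \<gamma> * real M * real N + 48 * B * \<gamma> * real M * (\<Sum>a=1..N. sqrt (real (na a)))"
    by (simp add: sum.distrib sum_distrib_left sum_divide_distrib algebra_simps)
  also have "\<dots> \<le> real N * (32 * B\<^sup>2 * ln (real J + 1)) + (2 * B * \<gamma> / 2 ^ M) * real T
      + 48 * B * \<gamma> * real M * real N + 48 * B * \<gamma> * real M * ((real T / (s * B) + real N * (s * B)) / 2)"
  proof -
    have lam: "s * B > 0" using spos B by simp
    have "(\<Sum>a=1..N. sqrt (real (na a))) \<le> (\<Sum>a=1..N. (real (na a) / (s * B) + s * B) / 2)"
      by (rule sum_mono) (rule sqrt_amgm[OF _ lam], simp)
    also have "\<dots> = ((\<Sum>a=1..N. real (na a)) / (s * B) + real N * (s * B)) / 2"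
      by (simp add: sum.distrib sum_divide_distrib[symmetric] add_divide_distrib)
    also have "\<dots> = (real T / (s * B) + real N * (s * B)) / 2" unfolding sumna ..
    finally have "(\<Sum>a=1..N. sqrt (real (na a))) \<le> (real T / (s * B) + real N * (s * B)) / 2" .
    hence "48 * B * \<gamma> * real M * (\<Sum>a=1..N. sqrt (real (na a))) \<le> 48 * B * \<gamma> * real M * ((real T / (s * B) + real N * (s * B)) / 2)"
      using B gpos by (intro mult_left_mono) auto
    thus ?thesis unfolding sumna by linarith
  qed
  also have "\<dots> \<le> 500 * max B (B\<^sup>2) * s * L"
    by (rule final_numeric[OF B _ L _ ML4 Ns g s3[symmetric] M2]) (use s1 lJ in auto)
  finally show ?thesis unfolding s_def L_def .
qed

theorem theorem6:
  shows "\<exists>c>0. \<forall>(B::real) (T::nat) (x::nat \<Rightarrow> real) (y::nat \<Rightarrow> real).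
     let \<gamma> = B * real T powr (-1/3);
         M = nat \<lceil>log 2 (\<gamma> * real T / B)\<rceil>
     in (0 < B \<and> 2 \<le> T \<and> (\<forall>t\<in>{1..T}. x t \<in> {0..1}) \<and> (\<forall>t\<in>{1..T}. \<bar>y t\<bar> \<le> B)
         \<and> 1 / \<gamma> \<in> \<int> \<and> 2 * B / \<gamma> \<in> \<int>)
        \<longrightarrow> (\<Sum>t=1..T. (y t - dc_pred B \<gamma> M x y t)\<^sup>2)
            - (INF f\<in>lip1_class B. \<Sum>t=1..T. (y t - f (x t))\<^sup>2)
            \<le> c * max B (B\<^sup>2) * real T powr (1/3) * ln (real T)"
proof (rule exI[of _ 500], intro conjI allI)
  show "(0::real) < 500" by simp
  fix B :: real and T :: nat and x y :: "nat \<Rightarrow> real"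
  define \<gamma> where "\<gamma> = B * real T powr (-1/3)"
  define M where "M = nat \<lceil>log 2 (\<gamma> * real T / B)\<rceil>"
  show "let \<gamma> = B * real T powr (-1/3);
         M = nat \<lceil>log 2 (\<gamma> * real T / B)\<rceil>
     in (0 < B \<and> 2 \<le> T \<and> (\<forall>t\<in>{1..T}. x t \<in> {0..1}) \<and> (\<forall>t\<in>{1..T}. \<bar>y t\<bar> \<le> B)
         \<and> 1 / \<gamma> \<in> \<int> \<and> 2 * B / \<gamma> \<in> \<int>)
        \<longrightarrow> (\<Sum>t=1..T. (y t - dc_pred B \<gamma> M x y t)\<^sup>2)
            - (INF f\<in>lip1_class B. \<Sum>t=1..T. (y t - f (x t))\<^sup>2)
            \<le> 500 * max B (B\<^sup>2) * real T powr (1/3) * ln (real T)"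
    unfolding Let_def \<gamma>_def[symmetric] M_def[symmetric]
  proof (intro impI)
    assume H: "0 < B \<and> 2 \<le> T \<and> (\<forall>t\<in>{1..T}. x t \<in> {0..1}) \<and> (\<forall>t\<in>{1..T}. \<bar>y t\<bar> \<le> B)
         \<and> 1 / \<gamma> \<in> \<int> \<and> 2 * B / \<gamma> \<in> \<int>"
    define X where "X = (\<Sum>t=1..T. (y t - dc_pred B \<gamma> M x y t)\<^sup>2)"
    define bnd where "bnd = 500 * max B (B\<^sup>2) * real T powr (1/3) * ln (real T)"
    have fb: "X - bnd \<le> (\<Sum>t=1..T. (y t - f (x t))\<^sup>2)" if f: "f \<in> lip1_class B" for f
      using final_bound[of B T x y \<gamma> M f] H f \<gamma>_def M_def unfolding X_def bnd_def by auto
    have ne: "lip1_class B \<noteq> {}"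
    proof -
      have "(\<lambda>_. 0) \<in> lip1_class B" using H by (auto simp: lip1_class_def)
      thus ?thesis by blast
    qed
    have "X - bnd \<le> (INF f\<in>lip1_class B. \<Sum>t=1..T. (y t - f (x t))\<^sup>2)"
      by (rule cINF_greatest[OF ne]) (rule fb)
    thus "X - (INF f\<in>lip1_class B. \<Sum>t=1..T. (y t - f (x t))\<^sup>2) \<le> bnd" by simp
  qed
qed


end
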